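(* Let $(\tilde Y,F)$ and $(\tilde Y',F')$ be $C^\omega_\rho$-hyperbolic transformations with implicit representations $( \mathcal Z_0, \mathcal W_1)$ and $( \mathcal Z_1, \mathcal W_2)$ respectively, and let $(\tilde {\mathcal Z}_0,\tilde {\mathcal W}_2)$ be the implicit representation of $(\tilde Y,F) \star (\tilde Y',F')$. Then, whenever $F$ sends $(z_0, w_0)\in \tilde Y$ to $(z_1,w_1)\in \tilde Y'$ and $F'$ sends $(z_1,w_1)$ to $(z_2,w_2)$, it holds \[ \frac1{1+\theta^2}\le \frac{ | \partial_{z_{2}} \tilde {\mathcal Z}_0 (z_{2},w_0)| }{ | \partial_{z_{1}} {\mathcal Z}_0 ( z_{1},w_0 )| \cdot |\partial_{z_{2}} {\mathcal Z}_{1} ( z_{2},w_{1})|} \le \frac1{1-\theta^2} \quad\text{and}\quad \frac1{1+\theta^2}\le \frac{ | \partial_{w_{0}} \tilde {\mathcal W}_2 (z_{2},w_0)| }{ | \partial_{w_{0}} {\mathcal W}_1 ( z_{1},w_0 )| \cdot |\partial_{w_{1}} {\mathcal W}_{2} ( z_{2},w_{1})|} \le \frac1{1-\theta^2}.\]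
   Context: Let $I=[-1,1]$, $\theta=1/2$, $\lambda=2$, $\rho>0$, $\tilde I=I+i[-\rho,\rho]$, $\tilde Y^e=\tilde I^2$, $\partial^s\tilde Y^{e}=\partial\tilde I\times\tilde I$, $\partial^u\tilde Y^{e}=\tilde I\times\partial\tilde I$, $\tilde\chi_h=\{|u_w|<\theta|u_z|\}$, $\tilde\chi_v=\{|u_z|<\theta|u_w|\}$. A box is a set $Y=\{(x,y)\in I^2:\phi^-(y)\le x\le\phi^+(y)\}$ diffeomorphic to $I^2$ with $\phi^\pm\in C^1(I)$, $\phi^-<\phi^+$, $\|\phi^\pm\|_{C^0}\le1$, $\|D\phi^\pm\|_{C^0}<\theta$. A $C^\omega_\rho$-box is a set $\tilde Y\subset\tilde I^2$ such that $\tilde Y\cap I^2$ is a box and $\tilde Y=\zeta(\tilde I^2)$ for a biholomorphism $\zeta(z,w)=(\mathcal Z(z,w),w)$ with $|\partial_w\mathcal Z|<\theta$; $\partial^u\tilde Y=\zeta(\tilde I\times\partial\tilde I)$, $\partial^s\tilde Y=\zeta(\partial\tilde I\times\tilde I)$. A $C^\omega_\rho$-hyperbolic transformation $(\tilde Y,F)$ is a $C^\omega_\rho$-box with a biholomorphism $F$ onto its image in $\tilde Y^e$ such that either $(\tilde Y,F)=(\tilde Y^e,\mathrm{id})$ or: (1) $F(\tilde Y)\subset\tilde Y^e$, $F(\partial^s\tilde Y)\subset\partial^s\tilde Y^e$, $\tilde Y\cap\partial^s\tilde Y^e=\emptyset$, $F(\tilde Y)\cap\partial^u\tilde Y^e=\emptyset$;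 (2) for $z\in\tilde Y$, $D_zF$ sends every non-zero vector outside $\tilde\chi_v$ into $\tilde\chi_h$ and more than $\lambda$-expands the modulus of its first coordinate; (3) for $z\in F(\tilde Y)$, $D_zF^{-1}$ sends every non-zero vector outside $\tilde\chi_h$ into $\tilde\chi_v$ and more than $\lambda$-expands the modulus of its second coordinate; (4) $F$ restricted to $\tilde Y\cap\mathbb R^2$ is a real analytic hyperbolic transformation (the real analogue of (1)–(3) on a box). The $\star$-product is $(\tilde Y,F)\star(\tilde Y',F')=(\tilde Y\cap F^{-1}(\tilde Y'),F'\circ F)$, which is again a $C^\omega_\rho$-hyperbolic transformation. The implicit representation of a $C^\omega_\rho$-hyperbolic transformation $(\tilde Y,F)$ is the pair of holomorphic functions $(\mathcal Z_0,\mathcal W_1)$ on $\tilde I^2$ such that for $(z_0,w_0)\in\tilde Y$ and $(z_1,w_1)\in F(\tilde Y)$: $F(z_0,w_0)=(z_1,w_1)$ if and only if $z_0=\mathcal Z_0(z_1,w_0)$ and $w_1=\mathcal W_1(z_1,w_0)$. *)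

theory Defs
  imports "HOL-Analysis.Analysis"
begin

definition theta :: real where "theta = 1/2"
definition lam :: real where "lam = 2"

definition Ireal :: "real set" where "Ireal = {-1..1}"

definition Itil :: "real \<Rightarrow> complex set" where
  "Itil \<rho> = {z. Re z \<in> {-1..1} \<and> \<bar>Im z\<bar> \<le> \<rho>}"

definition Ye :: "real \<Rightarrow> (complex \<times> complex) set" where
  "Ye \<rho> = Itil \<rho> \<times> Itil \<rho>"

definition dsYe :: "real \<Rightarrow> (complex \<times> complex) set" where
  "dsYe \<rho> = frontier (Itil \<rho>) \<times> Itil \<rho>"

definition duYe :: "real \<Rightarrow> (complex \<times> complex) set" where
  "duYe \<rho> = Itil \<rho> \<times> frontier (Itil \<rho>)"

definition chi_h :: "(complex \<times> complex) set" where
  "chi_h = {u. cmod (snd u) < theta * cmod (fst u)}"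

definition chi_v :: "(complex \<times> complex) set" where
  "chi_v = {u. cmod (fst u) < theta * cmod (snd u)}"

definition cmul :: "complex \<Rightarrow> complex \<times> complex \<Rightarrow> complex \<times> complex" where
  "cmul c u = (c * fst u, c * snd u)"

text \<open>Holomorphy of a function of two complex variables on a (possibly closed) set S:
  complex (Frechet) differentiable, with C-linear derivative, on an open neighbourhood of S.\<close>
definition holo2_on :: "(complex \<times> complex \<Rightarrow> complex) \<Rightarrow> (complex \<times> complex) set \<Rightarrow> bool" where
  "holo2_on f S \<longleftrightarrow> (\<exists>U. open U \<and> S \<subseteq> U \<and>
     (\<forall>p\<in>U. \<exists>D. (f has_derivative D) (at p) \<and> (\<forall>c u. D (cmul c u) = c * D u)))"

definition holo_map_on :: "(complex \<times> complex \<Rightarrow> complex \<times> complex) \<Rightarrow> (complex \<times> complex) set \<Rightarrow> bool" where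
  "holo_map_on F S \<longleftrightarrow> holo2_on (\<lambda>p. fst (F p)) S \<and> holo2_on (\<lambda>p. snd (F p)) S"

definition biholo_on :: "(complex \<times> complex \<Rightarrow> complex \<times> complex) \<Rightarrow> (complex \<times> complex) set \<Rightarrow> bool" where
  "biholo_on F S \<longleftrightarrow> holo_map_on F S \<and> inj_on F S \<and>
     (\<exists>G. holo_map_on G (F ` S) \<and> (\<forall>p\<in>S. G (F p) = p))"

definition cpt :: "real \<times> real \<Rightarrow> complex \<times> complex" where
  "cpt p = (complex_of_real (fst p), complex_of_real (snd p))"

definition rpt :: "complex \<times> complex \<Rightarrow> real \<times> real" where
  "rpt q = (Re (fst q), Re (snd q))"

definition realpts :: "(complex \<times> complex) set \<Rightarrow> (real \<times> real) set" where
  "realpts Y = {p. cpt p \<in> Y}"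

definition real_box_data :: "(real \<times> real) set \<Rightarrow> (real \<Rightarrow> real) \<Rightarrow> (real \<Rightarrow> real) \<Rightarrow> bool" where
  "real_box_data Y phim phip \<longleftrightarrow>
     (\<exists>dm dp. continuous_on Ireal dm \<and> continuous_on Ireal dp \<and>
        (\<forall>y\<in>Ireal. (phim has_real_derivative dm y) (at y within Ireal) \<and>
                   (phip has_real_derivative dp y) (at y within Ireal) \<and>
                   \<bar>dm y\<bar> < theta \<and> \<bar>dp y\<bar> < theta)) \<and>
     (\<forall>y\<in>Ireal. phim y < phip y \<and> \<bar>phim y\<bar> \<le> 1 \<and> \<bar>phip y\<bar> \<le> 1) \<and>
     Y = {(x, y). x \<in> Ireal \<and> y \<in> Ireal \<and> phim y \<le> x \<and> x \<le> phip y}"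

definition real_box :: "(real \<times> real) set \<Rightarrow> bool" where
  "real_box Y \<longleftrightarrow> (\<exists>phim phip. real_box_data Y phim phip)"

definition rchi_h :: "(real \<times> real) set" where
  "rchi_h = {u. \<bar>snd u\<bar> < theta * \<bar>fst u\<bar>}"

definition rchi_v :: "(real \<times> real) set" where
  "rchi_v = {u. \<bar>fst u\<bar> < theta * \<bar>snd u\<bar>}"

definition rdsYe :: "(real \<times> real) set" where
  "rdsYe = {-1, 1} \<times> Ireal"

definition rduYe :: "(real \<times> real) set" where
  "rduYe = Ireal \<times> {-1, 1}"

definition real_hyp_conds :: "(real \<times> real) set \<Rightarrow> (real \<times> real \<Rightarrow> real \<times> real) \<Rightarrow> bool" where
  "real_hyp_conds Y f \<longleftrightarrow>
     (\<exists>phim phip g. real_box_data Y phim phip \<and> inj_on f Y \<and> (\<forall>p\<in>Y. g (f p) = p) \<and>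
        f ` Y \<subseteq> Ireal \<times> Ireal \<and>
        f ` {(x, y). (x, y) \<in> Y \<and> (x = phim y \<or> x = phip y)} \<subseteq> rdsYe \<and>
        Y \<inter> rdsYe = {} \<and> f ` Y \<inter> rduYe = {} \<and>
        (\<forall>p\<in>Y. f differentiable (at p within Y) \<and>
           (\<forall>D. (f has_derivative D) (at p within Y) \<longrightarrow>
              (\<forall>u. u \<noteq> 0 \<and> u \<notin> rchi_v \<longrightarrow> D u \<in> rchi_h \<and> \<bar>fst (D u)\<bar> > lam * \<bar>fst u\<bar>))) \<and>
        (\<forall>q\<in>f ` Y. g differentiable (at q within f ` Y) \<and>
           (\<forall>D. (g has_derivative D) (at q within f ` Y) \<longrightarrow>
              (\<forall>u. u \<noteq> 0 \<and> u \<notin> rchi_h \<longrightarrow> D u \<in> rchi_v \<and> \<bar>snd (D u)\<bar> > lam * \<bar>snd u\<bar>))))"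

definition zeta :: "(complex \<times> complex \<Rightarrow> complex) \<Rightarrow> complex \<times> complex \<Rightarrow> complex \<times> complex" where
  "zeta Z p = (Z p, snd p)"

definition omega_box_data :: "real \<Rightarrow> (complex \<times> complex \<Rightarrow> complex) \<Rightarrow> (complex \<times> complex) set \<Rightarrow> bool" where
  "omega_box_data \<rho> Z Y \<longleftrightarrow>
     biholo_on (zeta Z) (Ye \<rho>) \<and>
     (\<forall>z w. (z, w) \<in> Ye \<rho> \<longrightarrow> cmod (deriv (\<lambda>w'. Z (z, w')) w) < theta) \<and>
     Y = zeta Z ` Ye \<rho> \<and> real_box (realpts Y)"

definition hyp_tr :: "real \<Rightarrow> (complex \<times> complex) set \<Rightarrow> (complex \<times> complex \<Rightarrow> complex \<times> complex) \<Rightarrow> bool" where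
  "hyp_tr \<rho> Y F \<longleftrightarrow>
     (Y = Ye \<rho> \<and> F = id) \<or>
     (\<exists>Z G. omega_box_data \<rho> Z Y \<and>
        holo_map_on F Y \<and> inj_on F Y \<and> holo_map_on G (F ` Y) \<and> (\<forall>p\<in>Y. G (F p) = p) \<and>
        F ` Y \<subseteq> Ye \<rho> \<and>
        F ` (zeta Z ` (frontier (Itil \<rho>) \<times> Itil \<rho>)) \<subseteq> dsYe \<rho> \<and>
        Y \<inter> dsYe \<rho> = {} \<and> F ` Y \<inter> duYe \<rho> = {} \<and>
        (\<forall>p\<in>Y. \<forall>D. (F has_derivative D) (at p) \<longrightarrow>
           (\<forall>u. u \<noteq> 0 \<and> u \<notin> chi_v \<longrightarrow> D u \<in> chi_h \<and> cmod (fst (D u)) > lam * cmod (fst u))) \<and>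
        (\<forall>q\<in>F ` Y. \<forall>D. (G has_derivative D) (at q) \<longrightarrow>
           (\<forall>u. u \<noteq> 0 \<and> u \<notin> chi_h \<longrightarrow> D u \<in> chi_v \<and> cmod (snd (D u)) > lam * cmod (snd u))) \<and>
        (\<forall>p\<in>realpts Y. F (cpt p) = cpt (rpt (F (cpt p)))) \<and>
        real_hyp_conds (realpts Y) (\<lambda>p. rpt (F (cpt p))))"

definition implicit_rep :: "real \<Rightarrow> (complex \<times> complex) set \<Rightarrow> (complex \<times> complex \<Rightarrow> complex \<times> complex)
     \<Rightarrow> (complex \<times> complex \<Rightarrow> complex) \<Rightarrow> (complex \<times> complex \<Rightarrow> complex) \<Rightarrow> bool" where
  "implicit_rep \<rho> Y F Z0 W1 \<longleftrightarrow> holo2_on Z0 (Ye \<rho>) \<and> holo2_on W1 (Ye \<rho>) \<and>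
     (\<forall>z0 w0 z1 w1. (z0, w0) \<in> Y \<longrightarrow> (z1, w1) \<in> F ` Y \<longrightarrow>
        (F (z0, w0) = (z1, w1) \<longleftrightarrow> z0 = Z0 (z1, w0) \<and> w1 = W1 (z1, w0)))"

text \<open>The star product: (Y \<inter> F^-1(Y'), F' o F).\<close>
definition star_dom :: "(complex \<times> complex) set \<Rightarrow> (complex \<times> complex \<Rightarrow> complex \<times> complex)
     \<Rightarrow> (complex \<times> complex) set \<Rightarrow> (complex \<times> complex) set" where
  "star_dom Y F Y' = {p \<in> Y. F p \<in> Y'}"

end

theory Submission
  imports Defs "HOL-Complex_Analysis.Complex_Analysis"
begin

lemma clin_repr:
  assumes "linear D" "\<forall>c u. D (cmul c u) = c * D u"
  shows "D (a,b) = a * D (1,0) + b * D (0,1)"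
proof -
  have "(a,b) = cmul a (1,0) + cmul b (0,1)" by (simp add: cmul_def)
  then have "D (a,b) = D (cmul a (1,0)) + D (cmul b (0,1))" using linear_add[OF assms(1)] by metis
  then show ?thesis using assms(2) by simp
qed

lemma clin_repr2:
  assumes "linear D" "\<forall>c u. D (cmul c u) = cmul c (D u)"
  shows "D (a,b) = cmul a (D (1,0)) + cmul b (D (0,1))"
proof -
  have "(a,b) = cmul a (1,0) + cmul b (0,1)" by (simp add: cmul_def)
  then have "D (a,b) = D (cmul a (1,0)) + D (cmul b (0,1))" using linear_add[OF assms(1)] by metis
  then show ?thesis using assms(2) by simp
qed

lemma slice1:
  assumes "(f has_derivative D) (at (z,w))" "\<forall>c u. D (cmul c u) = c * D u"
  shows "((\<lambda>z'. f (z',w)) has_field_derivative D (1,0)) (at z)"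
proof -
  have "((\<lambda>z'. (z',w)) has_derivative (\<lambda>h. (h,0))) (at z)"
    by (rule has_derivative_Pair[OF has_derivative_ident has_derivative_const])
  from has_derivative_compose[OF this assms(1)]
  have "((\<lambda>z'. f (z',w)) has_derivative (\<lambda>h. D (h,0))) (at z)" by simp
  moreover have "linear D" using assms(1) has_derivative_linear by blast
  then have "(\<lambda>h. D (h,0)) = (*) (D (1,0))"
  proof (intro ext)
    fix h show "D (h,0) = D (1,0) * h" using clin_repr[OF \<open>linear D\<close> assms(2), of h 0] by (simp add: mult.commute)
  qed
  ultimately show ?thesis by (simp add: has_field_derivative_def)
qed

lemma slice2:
  assumes "(f has_derivative D) (at (z,w))" "\<forall>c u. D (cmul c u) = c * D u"
  shows "((\<lambda>w'. f (z,w')) has_field_derivative D (0,1)) (at w)"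
proof -
  have "((\<lambda>w'. (z,w')) has_derivative (\<lambda>h. (0,h))) (at w)"
    by (rule has_derivative_Pair[OF has_derivative_const has_derivative_ident])
  from has_derivative_compose[OF this assms(1)]
  have "((\<lambda>w'. f (z,w')) has_derivative (\<lambda>h. D (0,h))) (at w)" by simp
  moreover have "linear D" using assms(1) has_derivative_linear by blast
  then have "(\<lambda>h. D (0,h)) = (*) (D (0,1))"
  proof (intro ext)
    fix h show "D (0,h) = D (0,1) * h" using clin_repr[OF \<open>linear D\<close> assms(2), of 0 h] by (simp add: mult.commute)
  qed
  ultimately show ?thesis by (simp add: has_field_derivative_def)
qed

lemma Itil_cbox: "Itil \<rho> = cbox (Complex (-1) (-\<rho>)) (Complex 1 \<rho>)"
  by (auto simp: Itil_def in_cbox_complex_iff)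

lemma Ye_cbox: "Ye \<rho> = cbox (Complex (-1) (-\<rho>), Complex (-1) (-\<rho>)) (Complex 1 \<rho>, Complex 1 \<rho>)"
  by (simp add: Ye_def Itil_cbox cbox_Pair_eq)


lemma FU:
  assumes "\<rho> > 0" "x0 \<in> Ye \<rho>" "\<delta> > 0"
    "(f has_derivative f1) (at x0 within Ye \<rho> \<inter> ball x0 \<delta>)"
    "(f has_derivative f2) (at x0 within Ye \<rho> \<inter> ball x0 \<delta>)"
  shows "f1 = f2"
proof -
  have e: "at x0 within Ye \<rho> \<inter> ball x0 \<delta> = at x0 within Ye \<rho>"
    by (rule at_within_nhd[of _ "ball x0 \<delta>"]) (use assms in auto)
  have B: "\<And>i. i \<in> Basis \<Longrightarrow> (Complex (-1) (-\<rho>), Complex (-1) (-\<rho>)) \<bullet> i < (Complex 1 \<rho>, Complex 1 \<rho>) \<bullet> i"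
    unfolding Basis_prod_def Basis_complex_def using assms(1) by (auto simp: inner_complex_def)
  show ?thesis
    apply (rule frechet_derivative_unique_within_closed_interval[OF B, of x0 f])
    using assms e by (auto simp: Ye_cbox)
qed


lemma implicit_solve:
  fixes \<Phi> :: "complex \<Rightarrow> complex \<times> complex \<Rightarrow> complex"
  assumes der: "((\<lambda>y. \<Phi> (fst y) (snd y)) has_derivative D\<Phi>) (at (z0,x0))"
    and c0: "D\<Phi> (1,0) \<noteq> 0"
    and cl: "\<And>a. D\<Phi> (a,0) = a * D\<Phi> (1,0)"
    and zero: "\<Phi> z0 x0 = 0"
    and hol: "\<exists>dh>0. \<forall>z x. cmod (z - z0) < dh \<longrightarrow> norm (x - x0) < dh \<longrightarrow> (\<lambda>z. \<Phi> z x) field_differentiable at z"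
  obtains g \<delta> where "\<delta> > 0" "g x0 = z0" "\<And>x. norm (x - x0) < \<delta> \<Longrightarrow> \<Phi> (g x) x = 0"
    "(g has_derivative (\<lambda>v. - D\<Phi> (0,v) / D\<Phi> (1,0))) (at x0)"
proof -
  define c where "c = D\<Phi> (1,0)"
  define L where "L = (\<lambda>v. D\<Phi> (0,v))"
  have bl: "bounded_linear D\<Phi>" using der has_derivative_bounded_linear by blast
  have split: "D\<Phi> (a,v) = a * c + L v" for a v
  proof -
    have "D\<Phi> (a,v) = D\<Phi> ((a,0) + (0,v))" by simp
    also have "\<dots> = D\<Phi> (a,0) + D\<Phi> (0,v)" using linear_add[OF bounded_linear.linear[OF bl]] by blast
    finally show ?thesis using cl[of a] by (simp add: c_def L_def)
  qed
  have n0: "norm ((0::complex), v) = norm v" for v :: "complex \<times> complex"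
    by (simp add: norm_Pair)
  obtain B where B: "B > 0" "\<And>v. cmod (L v) \<le> norm v * B"
  proof -
    from bounded_linear.pos_bounded[OF bl] obtain K where K: "K>0" "\<And>y. norm (D\<Phi> y) \<le> norm y * K" by blast
    have "cmod (L v) \<le> norm v * K" for v
    proof -
      have "cmod (D\<Phi> (0,v)) \<le> norm ((0::complex),v) * K" by (rule K(2))
      then show ?thesis by (simp only: L_def n0)
    qed
    then show ?thesis using K(1) by (intro that[of K])
  qed
  have cpos: "cmod c > 0" using c0 c_def by simp
  have exp: "\<exists>d>0. \<forall>z x. cmod (z-z0) < d \<longrightarrow> norm (x-x0) < d \<longrightarrow>
      cmod (\<Phi> z x - c*(z-z0) - L (x-x0)) \<le> e * (cmod (z-z0) + norm (x-x0))" if "e > 0" for e :: real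
  proof -
    from der[unfolded has_derivative_at_alt] \<open>e>0\<close> obtain d where d: "d>0" and
      dd: "\<And>y. norm (y - (z0,x0)) < d \<Longrightarrow> norm (\<Phi> (fst y) (snd y) - \<Phi> z0 x0 - D\<Phi> (y - (z0,x0))) \<le> e * norm (y - (z0,x0))"
      by force
    show ?thesis
    proof (intro exI[of _ "d/2"] conjI allI impI)
      show "d/2 > 0" using d by simp
      fix z x assume a: "cmod (z-z0) < d/2" "norm (x-x0) < d/2"
      have n: "norm ((z,x) - (z0,x0)) \<le> cmod (z-z0) + norm (x-x0)" using norm_Pair_le[of "z-z0" "x-x0"] by simp
      with a have "norm ((z,x) - (z0,x0)) < d" by simp
      from dd[OF this] have "cmod (\<Phi> z x - \<Phi> z0 x0 - D\<Phi> (z - z0, x - x0)) \<le> e * norm ((z,x) - (z0,x0))" by simp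
      also have "\<dots> \<le> e * (cmod (z-z0) + norm (x-x0))" using n \<open>e>0\<close> by (intro mult_left_mono) auto
      finally show "cmod (\<Phi> z x - c*(z-z0) - L (x-x0)) \<le> e * (cmod (z-z0) + norm (x-x0))" using zero split by (simp add: algebra_simps)
    qed
  qed
  define e1 where "e1 = cmod c / 4"
  have e1: "e1 > 0" unfolding e1_def using cpos by simp
  obtain d1 where d1: "d1>0" and D1: "\<And>z x. cmod (z-z0) < d1 \<Longrightarrow> norm (x-x0) < d1 \<Longrightarrow>
      cmod (\<Phi> z x - c*(z-z0) - L (x-x0)) \<le> e1 * (cmod (z-z0) + norm (x-x0))"
    using exp[OF e1] by blast
  obtain dh where dh: "dh > 0" and H: "\<And>z x. cmod (z - z0) < dh \<Longrightarrow> norm (x - x0) < dh \<Longrightarrow> (\<lambda>z. \<Phi> z x) field_differentiable at z"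
    using hol by blast
  define r where "r = min d1 dh / 2"
  have r: "r > 0" "r < d1" "r < dh" using d1 dh by (auto simp: r_def)
  have Be: "B + e1 > 0" using B e1 by simp
  have cr: "cmod c * r > 0" using cpos r by simp
  define \<eta> where "\<eta> = min r (cmod c * r / (4 * (B + e1)))"
  have \<eta>: "\<eta> > 0" "\<eta> \<le> r" "\<eta> \<le> cmod c * r / (4 * (B + e1))"
    using r cr Be by (auto simp: \<eta>_def)
  have \<eta>2: "2 * (B + e1) * \<eta> \<le> cmod c * r / 2"
  proof -
    have "2 * (B + e1) * \<eta> \<le> 2 * (B + e1) * (cmod c * r / (4 * (B + e1)))"
      using \<eta>(3) Be by (intro mult_left_mono) auto
    also have "\<dots> = cmod c * r / 2" using Be by (simp add: field_simps)
    finally show ?thesis .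
  qed
  have tri: "cmod (c*(z-z0)) \<le> cmod (\<Phi> z x) + cmod (L (x-x0)) + cmod (\<Phi> z x - c*(z-z0) - L (x-x0))" for z x
  proof -
    have eq: "(\<Phi> z x - L(x-x0)) - (\<Phi> z x - c*(z-z0) - L (x-x0)) = c*(z-z0)" by (simp add: algebra_simps)
    have "cmod (c*(z-z0)) \<le> cmod (\<Phi> z x - L(x-x0)) + cmod (\<Phi> z x - c*(z-z0) - L (x-x0))"
      using norm_triangle_ineq4[of "\<Phi> z x - L(x-x0)" "\<Phi> z x - c*(z-z0) - L (x-x0)"] unfolding eq .
    moreover have "cmod (\<Phi> z x - L(x-x0)) \<le> cmod (\<Phi> z x) + cmod (L(x-x0))" by (rule norm_triangle_ineq4)
    ultimately show ?thesis by linarith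
  qed
  have LB: "cmod (L (x-x0)) \<le> B * norm (x-x0)" for x using B(2)[of "x-x0"] by (simp add: mult.commute)
  have low: "cmod (\<Phi> z x) \<ge> cmod c * r - B * norm (x-x0) - e1 * (r + norm (x-x0))"
    if a: "cmod (z - z0) = r" "norm (x - x0) < \<eta>" for z x
  proof -
    have a1: "cmod (z-z0) < d1" "norm (x-x0) < d1" using a r \<eta> by auto
    have "cmod (\<Phi> z x - c*(z-z0) - L (x-x0)) \<le> e1 * (r + norm (x-x0))" using D1[OF a1] a by simp
    moreover have "cmod (c*(z-z0)) = cmod c * r" using a by (simp add: norm_mult)
    ultimately show ?thesis using tri[of z x] LB[of x] by linarith
  qed
  have up: "cmod (\<Phi> z0 x) \<le> (B + e1) * norm (x-x0)" if "norm (x-x0) < \<eta>" for x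
  proof -
    have a1: "cmod (z0-z0) < d1" "norm (x-x0) < d1" using that r \<eta> d1 by auto
    have "cmod (\<Phi> z0 x - L (x-x0)) \<le> e1 * norm (x-x0)" using D1[OF a1] by simp
    moreover have "cmod (\<Phi> z0 x) \<le> cmod (\<Phi> z0 x - L (x-x0)) + cmod (L (x-x0))"
      using norm_triangle_ineq[of "\<Phi> z0 x - L (x-x0)" "L (x-x0)"] by simp
    moreover have "(B + e1) * norm (x-x0) = B * norm (x-x0) + e1 * norm (x-x0)" by (simp add: distrib_right)
    ultimately show ?thesis using LB[of x] by linarith
  qed
  have ex: "\<exists>z. cmod (z - z0) < r \<and> \<Phi> z x = 0" if x: "norm (x - x0) < \<eta>" for x
  proof (rule ccontr)
    assume nz: "\<not> (\<exists>z. cmod (z - z0) < r \<and> \<Phi> z x = 0)"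
    define n where "n = norm (x - x0)"
    define m where "m = cmod c * r - B * n - e1 * (r + n)"
    have "2 * (B + e1) * n < 2 * (B + e1) * \<eta>" using x Be unfolding n_def by simp
    moreover have "e1 * (r + n) = cmod c * r / 4 + e1 * n" by (simp add: e1_def field_simps)
    moreover have "2 * (B + e1) * n = 2 * (B * n) + 2 * (e1 * n)" by (simp add: algebra_simps)
    moreover have "(B + e1) * n = B * n + e1 * n" by (simp add: algebra_simps)
    ultimately have mgt: "m > (B + e1) * n" using \<eta>2 cr unfolding m_def by linarith
    have "(B + e1) * n \<ge> 0" using Be unfolding n_def by simp
    with mgt have mpos: "m > 0" by linarith
    have dz: "cmod (z - z0) = dist z0 z" for z by (metis dist_commute dist_norm)
    have sph: "cmod (\<Phi> z x) \<ge> m" if "z \<in> sphere z0 r" for z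
      using low[of z x] that x dz[of z] unfolding m_def n_def by simp
    have nz0: "\<Phi> z x \<noteq> 0" if "z \<in> cball z0 r" for z
    proof (cases "cmod (z - z0) < r")
      case True then show ?thesis using nz by blast
    next
      case False
      have "dist z0 z \<le> r" using that by simp
      with False have "dist z0 z = r" using dz[of z] by linarith
      then have "z \<in> sphere z0 r" by simp
      then show ?thesis using sph[of z] mpos by auto
    qed
    have fd: "(\<lambda>z. \<Phi> z x) field_differentiable at z" if "z \<in> cball z0 r" for z
    proof -
      have "dist z0 z \<le> r" using that by simp
      then have "cmod (z - z0) < dh" using r dz[of z] by linarith
      moreover have "norm (x - x0) < dh" using x r \<eta> by linarith
      ultimately show ?thesis using H by blast
    qed
    have holc: "(\<lambda>z. \<Phi> z x) holomorphic_on cball z0 r"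
      using fd by (simp add: holomorphic_on_def field_differentiable_at_within)
    define f where "f = (\<lambda>z. inverse (\<Phi> z x))"
    have holf: "f holomorphic_on cball z0 r" unfolding f_def
      by (rule holomorphic_on_inverse[OF holc]) (use nz0 in auto)
    have "cmod (f z0) \<le> 1 / m"
    proof (rule maximum_modulus_frontier[of f "cball z0 r"])
      show "f holomorphic_on interior (cball z0 r)" using holf by (rule holomorphic_on_subset) auto
      show "continuous_on (closure (cball z0 r)) f" using holf holomorphic_on_imp_continuous_on by auto
      show "bounded (cball z0 r)" by simp
      show "z0 \<in> cball z0 r" using r by simp
      fix z assume "z \<in> frontier (cball z0 r)"
      then have "z \<in> sphere z0 r" by simp
      then have "m \<le> cmod (\<Phi> z x)" by (rule sph)
      from le_imp_inverse_le[OF this mpos] show "cmod (f z) \<le> 1 / m"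
        by (simp add: f_def norm_inverse divide_inverse)
    qed
    then have i: "inverse (cmod (\<Phi> z0 x)) \<le> inverse m" by (simp add: f_def norm_inverse divide_inverse)
    have "\<Phi> z0 x \<noteq> 0" using nz0[of z0] r by simp
    then have p: "cmod (\<Phi> z0 x) > 0" by simp
    have "cmod (\<Phi> z0 x) < m" using up[OF x] mgt unfolding n_def by simp
    from less_imp_inverse_less[OF this p] i show False by simp
  qed
  define K where "K = 2 * (B + e1) / cmod c"
  have K0: "K \<ge> 0" using Be cpos by (simp add: K_def)
  have zb: "cmod (z - z0) \<le> K * norm (x - x0)"
    if a: "cmod (z - z0) < r" "norm (x - x0) < \<eta>" "\<Phi> z x = 0" for z x
  proof -
    have a1: "cmod (z-z0) < d1" "norm (x-x0) < d1" using a r \<eta> by auto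
    have E: "cmod (\<Phi> z x - c*(z-z0) - L (x-x0)) \<le> e1 * (cmod (z-z0) + norm (x-x0))" using D1[OF a1] .
    have "cmod (c*(z-z0)) = cmod c * cmod (z - z0)" by (simp add: norm_mult)
    moreover have "cmod (\<Phi> z x) = 0" using a(3) by simp
    moreover have "cmod c * (K * norm (x-x0)) = 2 * (B * norm (x-x0)) + 2 * (e1 * norm (x-x0))"
      using cpos by (simp add: K_def field_simps)
    moreover have "e1 * (cmod (z-z0) + norm (x-x0)) = cmod c * cmod (z - z0) / 4 + e1 * norm (x-x0)"
      by (simp add: e1_def field_simps)
    moreover have "B * norm (x-x0) \<ge> 0" "e1 * norm (x-x0) \<ge> 0" using B e1 by auto
    ultimately have "cmod c * cmod (z-z0) \<le> cmod c * (K * norm (x - x0))"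
      using tri[of z x] LB[of x] E by linarith
    then show ?thesis using cpos by (simp add: mult_le_cancel_left_pos)
  qed
  define g where "g = (\<lambda>x. SOME z. cmod (z - z0) < r \<and> \<Phi> z x = 0)"
  have g: "cmod (g x - z0) < r \<and> \<Phi> (g x) x = 0" if "norm (x-x0) < \<eta>" for x
    unfolding g_def using someI_ex[OF ex[OF that]] .
  have gb: "cmod (g x - z0) \<le> K * norm (x-x0)" if "norm (x-x0) < \<eta>" for x
    using zb[of "g x" x] g[OF that] that by blast
  have g0: "g x0 = z0" using gb[of x0] \<eta> by simp
  have b1: "bounded_linear (\<lambda>v. D\<Phi> (0,v))"
    using bounded_linear_compose[OF bl bounded_linear_Pair[OF bounded_linear_zero bounded_linear_ident]] by simp
  have blL: "bounded_linear (\<lambda>v. - D\<Phi> (0,v) / c)"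
    using bounded_linear_compose[OF bounded_linear_divide[of c] bounded_linear_minus[OF b1]] by simp
  have cne: "c \<noteq> 0" using c0 c_def by simp
  have "(g has_derivative (\<lambda>v. - D\<Phi> (0,v) / D\<Phi> (1,0))) (at x0)"
    unfolding has_derivative_at_alt
  proof (intro conjI allI impI)
    show "bounded_linear (\<lambda>v. - D\<Phi> (0,v) / D\<Phi> (1,0))" using blL c_def by simp
    fix e :: real assume e: "e > 0"
    define e2 where "e2 = e * cmod c / (K + 1)"
    have K1: "K + 1 > 0" using K0 by simp
    have e2: "e2 > 0" using e cpos K1 by (simp add: e2_def)
    obtain d2 where d2: "d2>0" and D2: "\<And>z x. cmod (z-z0) < d2 \<Longrightarrow> norm (x-x0) < d2 \<Longrightarrow>
      cmod (\<Phi> z x - c*(z-z0) - L (x-x0)) \<le> e2 * (cmod (z-z0) + norm (x-x0))"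
      using exp[OF e2] by blast
    show "\<exists>d>0. \<forall>y. norm (y - x0) < d \<longrightarrow> cmod (g y - g x0 - - D\<Phi> (0, y - x0) / D\<Phi> (1, 0)) \<le> e * norm (y - x0)"
    proof (intro exI[of _ "min \<eta> (d2 / (K + 1))"] conjI allI impI)
      show "min \<eta> (d2 / (K + 1)) > 0" using \<eta> d2 K1 by simp
      fix y assume y: "norm (y - x0) < min \<eta> (d2 / (K + 1))"
      define n where "n = norm (y - x0)"
      have y1: "norm (y - x0) < \<eta>" using y by simp
      have y2: "n * (K + 1) < d2" using y K1 unfolding n_def by (simp add: field_simps)
      have gy: "cmod (g y - z0) \<le> K * n" using gb[OF y1] unfolding n_def .
      have n0: "n \<ge> 0" unfolding n_def by simp
      have "K * n \<le> n * (K + 1)" using n0 by (simp add: algebra_simps)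
      then have q1: "cmod (g y - z0) < d2" using gy y2 by linarith
      have "n \<le> n * (K + 1)" using n0 K0 by (simp add: algebra_simps)
      then have q2: "norm (y - x0) < d2" using y2 unfolding n_def by linarith
      have "cmod (\<Phi> (g y) y - c*(g y - z0) - L (y-x0)) \<le> e2 * (cmod (g y - z0) + norm (y-x0))"
        using D2[OF q1 q2] .
      moreover have "\<Phi> (g y) y - c*(g y - z0) - L (y-x0) = - (c*(g y - z0) + L (y-x0))"
        using g[OF y1] by simp
      moreover have "cmod (g y - z0) + norm (y-x0) \<le> (K + 1) * n"
        using gy unfolding n_def by (simp add: algebra_simps)
      then have "e2 * (cmod (g y - z0) + norm (y-x0)) \<le> e2 * ((K + 1) * n)"
        using e2 by (intro mult_left_mono) auto
      ultimately have "cmod (c*(g y - z0) + L (y-x0)) \<le> e2 * ((K + 1) * n)"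
        by (simp only: norm_minus_cancel)
      also have "\<dots> = cmod c * (e * n)" using K1 unfolding e2_def by (simp add: field_simps)
      finally have *: "cmod (c*(g y - z0) + L (y-x0)) \<le> cmod c * (e * n)" .
      have "g y - g x0 - - D\<Phi> (0, y - x0) / D\<Phi> (1, 0) = (c*(g y - z0) + L (y-x0)) / c"
        using g0 cne unfolding c_def L_def by (simp add: field_simps)
      moreover have "cmod ((c*(g y - z0) + L (y-x0)) / c) \<le> e * n"
        using * cpos by (simp add: norm_divide pos_divide_le_eq algebra_simps)
      ultimately show "cmod (g y - g x0 - - D\<Phi> (0, y - x0) / D\<Phi> (1, 0)) \<le> e * norm (y - x0)"
        unfolding n_def by simp
    qed
  qed
  then show ?thesis using that[of \<eta> g] \<eta> g0 g by auto
qed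

lemma GEN:
  fixes Y0 :: "(complex \<times> complex) set" and H :: "complex \<times> complex \<Rightarrow> complex \<times> complex"
    and pf :: "complex \<times> complex \<Rightarrow> complex"
  assumes rho: "\<rho> > 0" and rep: "implicit_rep \<rho> Y0 H Zt Wt"
    and x0: "x0 \<in> Ye \<rho>" and dpos: "\<delta> > 0"
    and inY0: "\<And>x. x \<in> Ye \<rho> \<inter> ball x0 \<delta> \<Longrightarrow> (pf x, snd x) \<in> Y0"
    and dpf: "(pf has_derivative Dp) (at x0)" and pi1: "Dp (1,0) \<noteq> 0"
    and dH: "(H has_derivative DH) (at (pf x0, snd x0))"
    and DHcl: "\<And>c u. DH (cmul c u) = cmul c (DH u)"
    and P0: "fst (DH (1,0)) \<noteq> 0"
    and inYe: "(fst (H (pf x0, snd x0)), snd x0) \<in> Ye \<rho>"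
  shows "deriv (\<lambda>z. Zt (z, snd x0)) (fst (H (pf x0, snd x0))) = 1 / fst (DH (1,0))"
    and "deriv (\<lambda>w. Wt (fst (H (pf x0, snd x0)), w)) (snd x0)
          = (fst (DH (1,0)) * snd (DH (0,1)) - fst (DH (0,1)) * snd (DH (1,0))) / fst (DH (1,0))"
proof -
  define z2 where "z2 = fst (H (pf x0, snd x0))"
  define w0 where "w0 = snd x0"
  have hZ: "holo2_on Zt (Ye \<rho>)" and hW: "holo2_on Wt (Ye \<rho>)" and
    iff: "\<And>a b c d. (a, b) \<in> Y0 \<Longrightarrow> (c, d) \<in> H ` Y0 \<Longrightarrow> (H (a, b) = (c, d) \<longleftrightarrow> a = Zt (c, b) \<and> d = Wt (c, b))"
    using rep unfolding implicit_rep_def by blast+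
  obtain DZ where DZ: "(Zt has_derivative DZ) (at (z2, w0))" "\<forall>c u. DZ (cmul c u) = c * DZ u"
    using hZ inYe unfolding holo2_on_def z2_def w0_def by blast
  obtain DW where DW: "(Wt has_derivative DW) (at (z2, w0))" "\<forall>c u. DW (cmul c u) = c * DW u"
    using hW inYe unfolding holo2_on_def z2_def w0_def by blast
  have linZ: "linear DZ" using DZ(1) has_derivative_linear by blast
  have linW: "linear DW" using DW(1) has_derivative_linear by blast
  have linH: "linear DH" using dH has_derivative_linear by blast
  have dP: "((\<lambda>x. (pf x, snd x)) has_derivative (\<lambda>v. (Dp v, snd v))) (at x0)"
    by (rule has_derivative_Pair[OF dpf has_derivative_snd[OF has_derivative_ident]])
  have dHP: "((\<lambda>x. H (pf x, snd x)) has_derivative (\<lambda>v. DH (Dp v, snd v))) (at x0)"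
    using has_derivative_compose[OF dP dH] by simp
  have dz2: "((\<lambda>x. (fst (H (pf x, snd x)), snd x)) has_derivative (\<lambda>v. (fst (DH (Dp v, snd v)), snd v))) (at x0)"
    by (rule has_derivative_Pair[OF has_derivative_fst[OF dHP] has_derivative_snd[OF has_derivative_ident]])
  have DZ': "(Zt has_derivative DZ) (at ((\<lambda>x. (fst (H (pf x, snd x)), snd x)) x0))"
    using DZ(1) unfolding z2_def w0_def by simp
  have DW': "(Wt has_derivative DW) (at ((\<lambda>x. (fst (H (pf x, snd x)), snd x)) x0))"
    using DW(1) unfolding z2_def w0_def by simp
  have dphi: "((\<lambda>x. Zt (fst (H (pf x, snd x)), snd x)) has_derivative (\<lambda>v. DZ (fst (DH (Dp v, snd v)), snd v))) (at x0)"
    using has_derivative_compose[OF dz2 DZ'] by simp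
  have dchi: "((\<lambda>x. Wt (fst (H (pf x, snd x)), snd x)) has_derivative (\<lambda>v. DW (fst (DH (Dp v, snd v)), snd v))) (at x0)"
    using has_derivative_compose[OF dz2 DW'] by simp
  have dsnd: "((\<lambda>x. snd (H (pf x, snd x))) has_derivative (\<lambda>v. snd (DH (Dp v, snd v)))) (at x0)"
    by (rule has_derivative_snd[OF dHP])
  define S where "S = Ye \<rho> \<inter> ball x0 \<delta>"
  have x0S: "x0 \<in> S" using x0 dpos by (simp add: S_def)
  have eqs: "pf x = Zt (fst (H (pf x, snd x)), snd x) \<and> snd (H (pf x, snd x)) = Wt (fst (H (pf x, snd x)), snd x)"
    if "x \<in> S" for x
  proof -
    have m: "(pf x, snd x) \<in> Y0" using inY0 that by (simp add: S_def)
    have "(fst (H (pf x, snd x)), snd (H (pf x, snd x))) \<in> H ` Y0" using m by simp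
    from iff[OF m this] show ?thesis by simp
  qed
  have e1: "(\<lambda>v. DZ (fst (DH (Dp v, snd v)), snd v)) = Dp"
  proof (rule FU[OF rho x0 dpos])
    show "(pf has_derivative (\<lambda>v. DZ (fst (DH (Dp v, snd v)), snd v))) (at x0 within Ye \<rho> \<inter> ball x0 \<delta>)"
      by (rule has_derivative_transform_within[OF has_derivative_at_withinI[OF dphi] dpos x0S[unfolded S_def]])
         (use eqs[unfolded S_def] in metis)
    show "(pf has_derivative Dp) (at x0 within Ye \<rho> \<inter> ball x0 \<delta>)"
      by (rule has_derivative_at_withinI[OF dpf])
  qed
  have e2: "(\<lambda>v. DW (fst (DH (Dp v, snd v)), snd v)) = (\<lambda>v. snd (DH (Dp v, snd v)))"
  proof (rule FU[OF rho x0 dpos])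
    show "((\<lambda>x. snd (H (pf x, snd x))) has_derivative (\<lambda>v. DW (fst (DH (Dp v, snd v)), snd v))) (at x0 within Ye \<rho> \<inter> ball x0 \<delta>)"
      by (rule has_derivative_transform_within[OF has_derivative_at_withinI[OF dchi] dpos x0S[unfolded S_def]])
         (use eqs[unfolded S_def] in metis)
    show "((\<lambda>x. snd (H (pf x, snd x))) has_derivative (\<lambda>v. snd (DH (Dp v, snd v)))) (at x0 within Ye \<rho> \<inter> ball x0 \<delta>)"
      by (rule has_derivative_at_withinI[OF dsnd])
  qed
  define P where "P = fst (DH (1,0))"
  define Q where "Q = fst (DH (0,1))"
  define R where "R = snd (DH (1,0))"
  define S' where "S' = snd (DH (0,1))"
  define p1 where "p1 = Dp (1,0)"
  define p2 where "p2 = Dp (0,1)"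
  have DHcl': "\<forall>c u. DH (cmul c u) = cmul c (DH u)" using DHcl by blast
  have DHa: "DH (a, b) = (a * P + b * Q, a * R + b * S')" for a b
    using clin_repr2[OF linH DHcl', of a b] by (simp add: cmul_def P_def Q_def R_def S'_def)
  have E1: "DZ (fst (DH (p1, 0)), 0) = p1" using fun_cong[OF e1, of "(1,0)"] by (simp add: p1_def)
  have f1: "fst (DH (p1,0)) = p1 * P" and s1: "snd (DH (p1,0)) = p1 * R" by (simp_all add: DHa)
  have "DZ (p1 * P, 0) = p1 * P * DZ (1,0)" using clin_repr[OF linZ DZ(2), of "p1 * P" 0] by simp
  then have "p1 * P * DZ (1,0) = p1" using E1 f1 by simp
  then have A0: "DZ (1,0) = 1 / P" using pi1 P0 unfolding p1_def P_def by (simp add: field_simps)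
  have E2: "DW (fst (DH (p1, 0)), 0) = snd (DH (p1, 0))" using fun_cong[OF e2, of "(1,0)"] by (simp add: p1_def)
  have "DW (p1 * P, 0) = p1 * P * DW (1,0)" using clin_repr[OF linW DW(2), of "p1 * P" 0] by simp
  then have "p1 * P * DW (1,0) = p1 * R" using E2 f1 s1 by simp
  then have C0: "DW (1,0) = R / P" using pi1 P0 unfolding p1_def P_def by (simp add: field_simps)
  have E3: "DW (fst (DH (p2, 1)), 1) = snd (DH (p2, 1))" using fun_cong[OF e2, of "(0,1)"] by (simp add: p2_def)
  have f2: "fst (DH (p2,1)) = p2 * P + Q" and s2: "snd (DH (p2,1)) = p2 * R + S'" by (simp_all add: DHa)
  have "DW (p2 * P + Q, 1) = (p2 * P + Q) * DW (1,0) + DW (0,1)" using clin_repr[OF linW DW(2), of "p2 * P + Q" 1] by simp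
  then have "(p2 * P + Q) * DW (1,0) + DW (0,1) = p2 * R + S'" using E3 f2 s2 by simp
  then have D0: "DW (0,1) = (P * S' - Q * R) / P" using C0 P0 unfolding P_def by (simp add: field_simps)
  have dZ1: "((\<lambda>z. Zt (z, w0)) has_field_derivative DZ (1,0)) (at z2)" by (rule slice1[OF DZ])
  show "deriv (\<lambda>z. Zt (z, snd x0)) (fst (H (pf x0, snd x0))) = 1 / fst (DH (1,0))"
    using DERIV_imp_deriv[OF dZ1] A0 unfolding z2_def w0_def P_def by simp
  have dW1: "((\<lambda>w. Wt (z2, w)) has_field_derivative DW (0,1)) (at w0)" by (rule slice2[OF DW])
  show "deriv (\<lambda>w. Wt (fst (H (pf x0, snd x0)), w)) (snd x0)
          = (fst (DH (1,0)) * snd (DH (0,1)) - fst (DH (0,1)) * snd (DH (1,0))) / fst (DH (1,0))"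
    using DERIV_imp_deriv[OF dW1] D0 unfolding z2_def w0_def P_def Q_def R_def S'_def by simp
qed

definition HC :: "(complex \<times> complex \<Rightarrow> complex \<times> complex) \<Rightarrow> bool" where
  "HC D \<longleftrightarrow> fst (D (1,0)) \<noteq> 0 \<and> cmod (snd (D (1,0))) \<le> theta * cmod (fst (D (1,0))) \<and>
     cmod (fst (D (0,1))) \<le> theta * cmod (fst (D (1,0))) \<and>
     fst (D (1,0)) * snd (D (0,1)) - fst (D (0,1)) * snd (D (1,0)) \<noteq> 0"

lemma theta_pos: "theta > 0" by (simp add: theta_def)

lemma holo_map_der:
  assumes "holo_map_on F S"
  shows "\<exists>U. open U \<and> S \<subseteq> U \<and> (\<forall>q\<in>U. \<exists>D. (F has_derivative D) (at q) \<and> (\<forall>c u. D (cmul c u) = cmul c (D u)))"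
proof -
  obtain U1 where U1: "open U1" "S \<subseteq> U1" "\<forall>p\<in>U1. \<exists>D. ((\<lambda>p. fst (F p)) has_derivative D) (at p) \<and> (\<forall>c u. D (cmul c u) = c * D u)"
    using assms unfolding holo_map_on_def holo2_on_def by blast
  obtain U2 where U2: "open U2" "S \<subseteq> U2" "\<forall>p\<in>U2. \<exists>D. ((\<lambda>p. snd (F p)) has_derivative D) (at p) \<and> (\<forall>c u. D (cmul c u) = c * D u)"
    using assms unfolding holo_map_on_def holo2_on_def by blast
  show ?thesis
  proof (intro exI[of _ "U1 \<inter> U2"] conjI ballI)
    show "open (U1 \<inter> U2)" using U1 U2 by auto
    show "S \<subseteq> U1 \<inter> U2" using U1 U2 by auto
    fix q assume q: "q \<in> U1 \<inter> U2"
    obtain D1 where D1: "((\<lambda>p. fst (F p)) has_derivative D1) (at q)" "\<forall>c u. D1 (cmul c u) = c * D1 u"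
      using U1(3) q by blast
    obtain D2 where D2: "((\<lambda>p. snd (F p)) has_derivative D2) (at q)" "\<forall>c u. D2 (cmul c u) = c * D2 u"
      using U2(3) q by blast
    have "((\<lambda>p. (fst (F p), snd (F p))) has_derivative (\<lambda>u. (D1 u, D2 u))) (at q)"
      by (rule has_derivative_Pair[OF D1(1) D2(1)])
    then have "(F has_derivative (\<lambda>u. (D1 u, D2 u))) (at q)" by simp
    moreover have "\<forall>c u. (\<lambda>u. (D1 u, D2 u)) (cmul c u) = cmul c ((\<lambda>u. (D1 u, D2 u)) u)"
      using D1(2) D2(2) by (simp add: cmul_def)
    ultimately show "\<exists>D. (F has_derivative D) (at q) \<and> (\<forall>c u. D (cmul c u) = cmul c (D u))" by blast
  qed
qed

lemma comp_id_deriv: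
  assumes rho: "\<rho> > 0" and q: "q \<in> Ye \<rho>" and dA: "(A has_derivative DA) (at q)"
    and dB: "(B has_derivative DB) (at (A q))" and eq: "\<And>x. x \<in> Ye \<rho> \<Longrightarrow> B (A x) = C x"
    and dC: "(C has_derivative DC) (at q)"
  shows "(\<lambda>v. DB (DA v)) = DC"
proof (rule FU[OF rho q zero_less_one])
  have d: "((\<lambda>x. B (A x)) has_derivative (\<lambda>v. DB (DA v))) (at q)" by (rule has_derivative_compose[OF dA dB])
  show "(C has_derivative (\<lambda>v. DB (DA v))) (at q within Ye \<rho> \<inter> ball q 1)"
    by (rule has_derivative_transform_within[OF has_derivative_at_withinI[OF d] zero_less_one])
       (use q eq in auto)
  show "(C has_derivative DC) (at q within Ye \<rho> \<inter> ball q 1)" by (rule has_derivative_at_withinI[OF dC])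
qed

lemma zeta_snd: "(\<lambda>x. snd (zeta Z x)) = snd" and zeta_fst: "(\<lambda>x. fst (zeta Z x)) = Z"
  by (auto simp: zeta_def)

lemma HD:
  assumes rho: "\<rho> > 0" and ht: "hyp_tr \<rho> Y F"
  shows "\<exists>Z UZ UF. Y = zeta Z ` Ye \<rho> \<and> F ` Y \<subseteq> Ye \<rho> \<and> open UZ \<and> Ye \<rho> \<subseteq> UZ \<and>
     (\<forall>q\<in>UZ. \<exists>D. (zeta Z has_derivative D) (at q) \<and> (\<forall>c u. D (cmul c u) = cmul c (D u))) \<and>
     (\<forall>q\<in>Ye \<rho>. \<forall>D. (zeta Z has_derivative D) (at q) \<longrightarrow>
         fst (D (1,0)) \<noteq> 0 \<and> snd (D (1,0)) = 0 \<and> snd (D (0,1)) = 1 \<and> cmod (fst (D (0,1))) \<le> theta) \<and>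
     open UF \<and> Y \<subseteq> UF \<and>
     (\<forall>q\<in>UF. \<exists>D. (F has_derivative D) (at q) \<and> (\<forall>c u. D (cmul c u) = cmul c (D u))) \<and>
     (\<forall>p\<in>Y. \<forall>D. (F has_derivative D) (at p) \<longrightarrow> HC D) \<and>
     ((Y = Ye \<rho> \<and> F = id) \<or>
      (F ` (zeta Z ` (frontier (Itil \<rho>) \<times> Itil \<rho>)) \<subseteq> dsYe \<rho> \<and> Y \<inter> dsYe \<rho> = {} \<and> F ` Y \<inter> duYe \<rho> = {}))"
proof -
  from ht[unfolded hyp_tr_def] consider (idc) "Y = Ye \<rho> \<and> F = id" |
    (nid) "\<exists>Z G. omega_box_data \<rho> Z Y \<and>
        holo_map_on F Y \<and> inj_on F Y \<and> holo_map_on G (F ` Y) \<and> (\<forall>p\<in>Y. G (F p) = p) \<and>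
        F ` Y \<subseteq> Ye \<rho> \<and>
        F ` (zeta Z ` (frontier (Itil \<rho>) \<times> Itil \<rho>)) \<subseteq> dsYe \<rho> \<and>
        Y \<inter> dsYe \<rho> = {} \<and> F ` Y \<inter> duYe \<rho> = {} \<and>
        (\<forall>p\<in>Y. \<forall>D. (F has_derivative D) (at p) \<longrightarrow>
           (\<forall>u. u \<noteq> 0 \<and> u \<notin> chi_v \<longrightarrow> D u \<in> chi_h \<and> cmod (fst (D u)) > lam * cmod (fst u))) \<and>
        (\<forall>q\<in>F ` Y. \<forall>D. (G has_derivative D) (at q) \<longrightarrow>
           (\<forall>u. u \<noteq> 0 \<and> u \<notin> chi_h \<longrightarrow> D u \<in> chi_v \<and> cmod (snd (D u)) > lam * cmod (snd u))) \<and>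
        (\<forall>p\<in>realpts Y. F (cpt p) = cpt (rpt (F (cpt p)))) \<and>
        real_hyp_conds (realpts Y) (\<lambda>p. rpt (F (cpt p)))"
    by blast
  then show ?thesis
  proof cases
    case idc
    then have Y: "Y = Ye \<rho>" and Fi: "F = id" by auto
    have zi: "zeta fst = (\<lambda>x. x)" by (auto simp: zeta_def)
    have Fi': "F = (\<lambda>x. x)" using Fi by (simp add: id_def)
    have did: "((\<lambda>x. x) has_derivative (\<lambda>x. x)) (at q)" for q :: "complex \<times> complex"
      by (rule has_derivative_ident)
    have uid: "D = (\<lambda>x. x)" if "((\<lambda>x. x) has_derivative D) (at q)" for D and q :: "complex \<times> complex"
      using has_derivative_unique[OF that did] .
    show ?thesis
    proof (intro exI[of _ fst] exI[of _ UNIV] conjI ballI allI impI)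
      show "Y = zeta fst ` Ye \<rho>" using Y zi by simp
      show "F ` Y \<subseteq> Ye \<rho>" using Y Fi by simp
      fix q D assume "(zeta fst has_derivative D) (at q)"
      then have "D = (\<lambda>x. x)" using zi uid by simp
      then show "fst (D (1,0)) \<noteq> 0" "snd (D (1,0)) = 0" "snd (D (0,1)) = 1" "cmod (fst (D (0,1))) \<le> theta"
        using theta_pos by auto
    next
      fix q D assume "(F has_derivative D) (at q)"
      then have "D = (\<lambda>x. x)" using Fi' uid by simp
      then show "HC D" using theta_pos by (simp add: HC_def)
    next
      fix q :: "complex \<times> complex"
      show "\<exists>D. (zeta fst has_derivative D) (at q) \<and> (\<forall>c u. D (cmul c u) = cmul c (D u))"
        using zi did by (intro exI[of _ "\<lambda>x. x"]) auto
      show "\<exists>D. (F has_derivative D) (at q) \<and> (\<forall>c u. D (cmul c u) = cmul c (D u))"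
        using Fi' did by (intro exI[of _ "\<lambda>x. x"]) auto
    qed (use Y Fi in auto)
  next
    case nid
    from nid obtain Z G where ob: "omega_box_data \<rho> Z Y" and hF: "holo_map_on F Y" and hG: "holo_map_on G (F ` Y)"
      and GF: "\<forall>p\<in>Y. G (F p) = p" and sub: "F ` Y \<subseteq> Ye \<rho>"
      and fr: "F ` (zeta Z ` (frontier (Itil \<rho>) \<times> Itil \<rho>)) \<subseteq> dsYe \<rho>" "Y \<inter> dsYe \<rho> = {}" "F ` Y \<inter> duYe \<rho> = {}"
      and cone: "\<forall>p\<in>Y. \<forall>D. (F has_derivative D) (at p) \<longrightarrow>
           (\<forall>u. u \<noteq> 0 \<and> u \<notin> chi_v \<longrightarrow> D u \<in> chi_h \<and> cmod (fst (D u)) > lam * cmod (fst u))"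
      by iprover
    from ob have bih: "biholo_on (zeta Z) (Ye \<rho>)"
      and bnd: "\<forall>z w. (z, w) \<in> Ye \<rho> \<longrightarrow> cmod (deriv (\<lambda>w'. Z (z, w')) w) < theta"
      and Yeq: "Y = zeta Z ` Ye \<rho>"
      unfolding omega_box_data_def by blast+
    from bih obtain Gz where hz: "holo_map_on (zeta Z) (Ye \<rho>)" and hGz: "holo_map_on Gz (zeta Z ` Ye \<rho>)"
      and Gzz: "\<forall>p\<in>Ye \<rho>. Gz (zeta Z p) = p"
      unfolding biholo_on_def by blast
    obtain UZ where UZ: "open UZ" "Ye \<rho> \<subseteq> UZ" "\<forall>q\<in>UZ. \<exists>D. (zeta Z has_derivative D) (at q) \<and> (\<forall>c u. D (cmul c u) = cmul c (D u))"
      using holo_map_der[OF hz] by blast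
    obtain UG where UG: "open UG" "zeta Z ` Ye \<rho> \<subseteq> UG" "\<forall>q\<in>UG. \<exists>D. (Gz has_derivative D) (at q) \<and> (\<forall>c u. D (cmul c u) = cmul c (D u))"
      using holo_map_der[OF hGz] by blast
    obtain UF where UF: "open UF" "Y \<subseteq> UF" "\<forall>q\<in>UF. \<exists>D. (F has_derivative D) (at q) \<and> (\<forall>c u. D (cmul c u) = cmul c (D u))"
      using holo_map_der[OF hF] by blast
    obtain UGG where UGG: "open UGG" "F ` Y \<subseteq> UGG" "\<forall>q\<in>UGG. \<exists>D. (G has_derivative D) (at q) \<and> (\<forall>c u. D (cmul c u) = cmul c (D u))"
      using holo_map_der[OF hG] by blast
    have zf: "fst (D (1,0)) \<noteq> 0 \<and> snd (D (1,0)) = 0 \<and> snd (D (0,1)) = 1 \<and> cmod (fst (D (0,1))) \<le> theta"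
      if q: "q \<in> Ye \<rho>" and dq: "(zeta Z has_derivative D) (at q)" for q D
    proof -
      obtain D0 where D0: "(zeta Z has_derivative D0) (at q)" "\<forall>c u. D0 (cmul c u) = cmul c (D0 u)"
        using UZ q by blast
      have Dcl: "\<forall>c u. D (cmul c u) = cmul c (D u)" using has_derivative_unique[OF dq D0(1)] D0(2) by simp
      have "((\<lambda>x. snd (zeta Z x)) has_derivative (\<lambda>u. snd (D u))) (at q)" by (rule has_derivative_snd[OF dq])
      then have "(snd has_derivative (\<lambda>u. snd (D u))) (at q)" by (simp only: zeta_snd)
      moreover have "(snd has_derivative snd) (at q)"
        using has_derivative_snd[OF has_derivative_ident[of "at q"]] by (simp add: fun_eq_iff)
      ultimately have sD: "(\<lambda>u. snd (D u)) = snd" by (rule has_derivative_unique)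
      have s1: "snd (D (1,0)) = 0" and s2: "snd (D (0,1)) = 1" using fun_cong[OF sD, of "(1,0)"] fun_cong[OF sD, of "(0,1)"] by auto
      have "((\<lambda>x. fst (zeta Z x)) has_derivative (\<lambda>u. fst (D u))) (at q)" by (rule has_derivative_fst[OF dq])
      then have dZ: "(Z has_derivative (\<lambda>u. fst (D u))) (at q)" by (simp only: zeta_fst)
      obtain z w where qzw: "q = (z, w)" by (cases q)
      have "\<forall>c u. fst (D (cmul c u)) = c * fst (D u)" using Dcl by (simp add: cmul_def)
      from slice2[OF dZ[unfolded qzw] this] have "deriv (\<lambda>w'. Z (z, w')) w = fst (D (0,1))"
        by (rule DERIV_imp_deriv)
      then have b: "cmod (fst (D (0,1))) \<le> theta" using bnd q qzw by (metis less_imp_le)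
      have f1: "fst (D (1,0)) \<noteq> 0"
      proof
        assume f0: "fst (D (1,0)) = 0"
        have zq: "zeta Z q \<in> UG" using UG(2) q by blast
        obtain DG where DG: "(Gz has_derivative DG) (at (zeta Z q))" using UG(3) zq by blast
        have "(\<lambda>v. DG (D v)) = (\<lambda>v. v)"
          by (rule comp_id_deriv[OF rho q dq DG _ has_derivative_ident]) (use Gzz in auto)
        from fun_cong[OF this, of "(1,0)"] have "DG (D (1,0)) = (1,0)" by simp
        moreover have "D (1,0) = 0" using f0 s1 by (simp add: prod_eq_iff)
        moreover have "DG 0 = 0" using has_derivative_linear[OF DG] linear_0 by blast
        ultimately show False by (simp add: zero_prod_def)
      qed
      show ?thesis using f1 s1 s2 b by blast
    qed
    have fc: "HC D" if p: "p \<in> Y" and dp: "(F has_derivative D) (at p)" for p D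
    proof -
      obtain D0 where D0: "(F has_derivative D0) (at p)" "\<forall>c u. D0 (cmul c u) = cmul c (D0 u)"
        using UF p by blast
      have Dcl: "\<forall>c u. D (cmul c u) = cmul c (D u)" using has_derivative_unique[OF dp D0(1)] D0(2) by simp
      have lin: "linear D" using has_derivative_linear[OF dp] .
      define P where "P = fst (D (1,0))"
      define Q where "Q = fst (D (0,1))"
      define R where "R = snd (D (1,0))"
      define S where "S = snd (D (0,1))"
      have Da: "D (a, b) = (a * P + b * Q, a * R + b * S)" for a b
        using clin_repr2[OF lin Dcl, of a b] by (simp add: cmul_def P_def Q_def R_def S_def)
      have cn: "\<And>u. u \<noteq> 0 \<Longrightarrow> u \<notin> chi_v \<Longrightarrow> D u \<in> chi_h" using cone p dp by blast
      have "(1::complex, 0::complex) \<notin> chi_v" by (simp add: chi_v_def)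
      then have "D (1,0) \<in> chi_h" using cn[of "(1,0)"] by (simp add: zero_prod_def)
      then have h1: "cmod R < theta * cmod P" by (simp add: chi_h_def P_def R_def)
      then have P0: "P \<noteq> 0" by auto
      have h2: "cmod Q < theta * cmod P"
      proof (rule ccontr)
        assume nq: "\<not> cmod Q < theta * cmod P"
        have "(Q, -P) \<noteq> 0" using P0 by (simp add: zero_prod_def)
        moreover have "(Q, -P) \<notin> chi_v" using nq by (simp add: chi_v_def)
        ultimately have "D (Q, -P) \<in> chi_h" using cn by blast
        then show False by (simp add: Da chi_h_def algebra_simps)
      qed
      have det: "P * S - Q * R \<noteq> 0"
      proof
        assume d0: "P * S - Q * R = 0"
        obtain q where q: "q \<in> Ye \<rho>" and pq: "p = zeta Z q" using p Yeq by blast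
        obtain Dz where Dz: "(zeta Z has_derivative Dz) (at q)" "\<forall>c u. Dz (cmul c u) = cmul c (Dz u)"
          using UZ q by blast
        have zq: "fst (Dz (1,0)) \<noteq> 0 \<and> snd (Dz (1,0)) = 0 \<and> snd (Dz (0,1)) = 1" using zf[OF q Dz(1)] by blast
        have Fp: "F p \<in> UGG" using UGG(2) p by blast
        obtain DG where DG: "(G has_derivative DG) (at (F p))" using UGG(3) Fp by blast
        have dGF: "((\<lambda>x. G (F x)) has_derivative (\<lambda>v. DG (D v))) (at (zeta Z q))"
          using has_derivative_compose[OF dp DG] pq by simp
        have idf: "(\<lambda>v. DG (D (Dz v))) = Dz"
          by (rule comp_id_deriv[OF rho q Dz(1) dGF _ Dz(1)]) (use GF Yeq in auto)
        define Zz where "Zz = fst (Dz (1,0))"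
        define Zw where "Zw = fst (Dz (0,1))"
        have Dza: "Dz (a, b) = (a * Zz + b * Zw, b)" for a b
          using clin_repr2[OF has_derivative_linear[OF Dz(1)] Dz(2), of a b] zq
          by (simp add: cmul_def Zz_def Zw_def prod_eq_iff)
        have Zz0: "Zz \<noteq> 0" using zq Zz_def by simp
        define v where "v = ((Q + P * Zw) / Zz, - P)"
        have Dzv: "Dz v = (Q, - P)" using Zz0 by (simp add: v_def Dza field_simps)
        have "D (Q, -P) = 0" using d0 by (simp add: Da algebra_simps zero_prod_def)
        moreover have "DG 0 = 0" using has_derivative_linear[OF DG] linear_0 by blast
        ultimately have "DG (D (Dz v)) = 0" using Dzv by simp
        then have "Dz v = 0" using fun_cong[OF idf, of v] by simp
        then show False using Dzv P0 by (simp add: zero_prod_def)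
      qed
      show "HC D" unfolding HC_def using P0 h1 h2 det
        by (simp add: P_def Q_def R_def S_def less_imp_le)
    qed
    have A1: "\<forall>q\<in>Ye \<rho>. \<forall>D. (zeta Z has_derivative D) (at q) \<longrightarrow>
         fst (D (1,0)) \<noteq> 0 \<and> snd (D (1,0)) = 0 \<and> snd (D (0,1)) = 1 \<and> cmod (fst (D (0,1))) \<le> theta"
      using zf by blast
    have A2: "\<forall>p\<in>Y. \<forall>D. (F has_derivative D) (at p) \<longrightarrow> HC D" using fc by blast
    show ?thesis
      apply (rule exI[of _ Z], rule exI[of _ UZ], rule exI[of _ UF])
      apply (insert Yeq sub UZ A1 UF A2 fr)
      apply (intro conjI disjI2)
      apply assumption+
      done
  qed
qed

lemma cont_nbhd:
  assumes "(f has_derivative D) (at x0)" "open U" "f x0 \<in> U"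
  shows "\<exists>d>0. \<forall>x. norm (x - x0) < d \<longrightarrow> f x \<in> U"
proof -
  have "continuous (at x0) f" using has_derivative_continuous[OF assms(1)] .
  then obtain S where S: "open S" "x0 \<in> S" "\<forall>x\<in>S. f x \<in> U" using continuous_at_open assms(2,3) by metis
  then obtain d where d: "d>0" "ball x0 d \<subseteq> S" using open_contains_ball by blast
  show ?thesis
  proof (intro exI[of _ d] conjI allI impI)
    show "d > 0" by (rule d(1))
    fix x assume "norm (x - x0) < d"
    then have "x \<in> ball x0 d" by (simp add: dist_norm norm_minus_commute)
    then show "f x \<in> U" using d S by blast
  qed
qed

lemma Itil_interior:
  assumes "a \<in> Itil \<rho>" "a \<notin> frontier (Itil \<rho>)"
  shows "\<exists>e>0. ball a e \<subseteq> Itil \<rho>"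
proof -
  have "closed (Itil \<rho>)" unfolding Itil_cbox by (rule closed_cbox)
  then have "a \<in> interior (Itil \<rho>)" using assms by (simp add: frontier_def closure_closed)
  then show ?thesis by (simp add: mem_interior)
qed

lemma ALG:
  fixes P Q R S P' Q' R' S' :: complex
  assumes P0: "P \<noteq> 0" and P'0: "P' \<noteq> 0" and hR: "cmod R \<le> theta * cmod P" and hQ: "cmod Q' \<le> theta * cmod P'"
    and d0: "P * S - Q * R \<noteq> 0" and d'0: "P' * S' - Q' * R' \<noteq> 0"
  defines "N \<equiv> P' * P + Q' * R"
  shows "1 / (1 + theta\<^sup>2) \<le> cmod (1 / N) / (cmod (1 / P) * cmod (1 / P'))
       \<and> cmod (1 / N) / (cmod (1 / P) * cmod (1 / P')) \<le> 1 / (1 - theta\<^sup>2)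
       \<and> 1 / (1 + theta\<^sup>2) \<le> cmod ((P' * S' - Q' * R') * (P * S - Q * R) / N)
            / (cmod ((P * S - Q * R) / P) * cmod ((P' * S' - Q' * R') / P'))
       \<and> cmod ((P' * S' - Q' * R') * (P * S - Q * R) / N)
            / (cmod ((P * S - Q * R) / P) * cmod ((P' * S' - Q' * R') / P')) \<le> 1 / (1 - theta\<^sup>2)"
proof -
  define a where "a = cmod P * cmod P'"
  have apos: "a > 0" using P0 P'0 by (simp add: a_def)
  have "cmod (Q' * R) = cmod Q' * cmod R" by (simp add: norm_mult)
  also have "\<dots> \<le> (theta * cmod P') * (theta * cmod P)"
    using hR hQ theta_pos by (intro mult_mono) auto
  also have "\<dots> = a / 4" by (simp add: a_def theta_def)
  finally have qr: "cmod (Q' * R) \<le> a / 4" .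
  have pp: "cmod (P' * P) = a" by (simp add: a_def norm_mult)
  have n1: "cmod N \<le> a + a / 4"
    using norm_triangle_ineq[of "P' * P" "Q' * R"] qr pp unfolding N_def by linarith
  have n2: "cmod N \<ge> a - a / 4"
    using norm_diff_ineq[of "P' * P" "Q' * R"] qr pp unfolding N_def by linarith
  have npos: "cmod N > 0" using n2 apos by linarith
  have N0: "N \<noteq> 0" using npos by auto
  have r1: "cmod (1 / N) / (cmod (1 / P) * cmod (1 / P')) = a / cmod N"
    using P0 P'0 N0 by (simp add: a_def norm_divide field_simps)
  define d where "d = P * S - Q * R"
  define d' where "d' = P' * S' - Q' * R'"
  have dd: "d \<noteq> 0" "d' \<noteq> 0" using d0 d'0 by (simp_all add: d_def d'_def)
  have r2': "cmod (d' * d / N) / (cmod (d / P) * cmod (d' / P')) = a / cmod N"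
    using P0 P'0 N0 dd by (simp add: a_def norm_divide norm_mult field_simps)
  note r2 = r2'[unfolded d_def d'_def]
  have t2: "theta\<^sup>2 = 1/4" by (simp add: theta_def power2_eq_square)
  have lo: "4/5 \<le> a / cmod N"
    using n1 npos apos by (simp add: divide_simps)
  have hi: "a / cmod N \<le> 4/3"
    using n2 npos apos by (simp add: divide_simps)
  show ?thesis unfolding r1 r2 t2 using lo hi by simp
qed

lemma clin_coeffs:
  assumes "linear D" "\<forall>c u. D (cmul c u) = cmul c (D u)"
  obtains a1 b1 a2 b2 where "\<And>a b. D (a,b) = (a*a1 + b*b1, a*a2 + b*b2)"
proof -
  have "D (a,b) = (a * fst (D (1,0)) + b * fst (D (0,1)), a * snd (D (1,0)) + b * snd (D (0,1)))" for a b
    using clin_repr2[OF assms, of a b] by (simp add: cmul_def)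
  then show ?thesis by (rule that)
qed

lemma clin_field_diff:
  assumes "(f has_derivative D) (at z)" "\<And>h. D h = h * D 1"
  shows "f field_differentiable at z"
proof -
  have "D = (*) (D 1)"
  proof
    fix h show "D h = D 1 * h" using assms(2)[of h] by (simp add: mult.commute)
  qed
  then show ?thesis using assms(1) unfolding field_differentiable_def has_field_derivative_def by metis
qed

lemma COMPc:
  assumes rho: "\<rho> > 0"
    and rep: "implicit_rep \<rho> (star_dom Y F Y') (F' \<circ> F) Z0t W2t"
    and Yeq: "Y = zeta Z ` Ye \<rho>" and Y'eq: "Y' = zeta Z' ` Ye \<rho>"
    and sub1: "F ` Y \<subseteq> Ye \<rho>" and sub2: "F' ` Y' \<subseteq> Ye \<rho>"
    and UZ: "open UZ" "Ye \<rho> \<subseteq> UZ" "\<forall>q\<in>UZ. \<exists>D. (zeta Z has_derivative D) (at q) \<and> (\<forall>c u. D (cmul c u) = cmul c (D u))"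
    and UZ': "open UZ'" "Ye \<rho> \<subseteq> UZ'" "\<forall>q\<in>UZ'. \<exists>D. (zeta Z' has_derivative D) (at q) \<and> (\<forall>c u. D (cmul c u) = cmul c (D u))"
    and UF: "open UF" "Y \<subseteq> UF" "\<forall>q\<in>UF. \<exists>D. (F has_derivative D) (at q) \<and> (\<forall>c u. D (cmul c u) = cmul c (D u))"
    and fr1: "F ` (zeta Z ` (frontier (Itil \<rho>) \<times> Itil \<rho>)) \<subseteq> dsYe \<rho>" "F ` Y \<inter> duYe \<rho> = {}"
    and fr2: "Y' \<inter> dsYe \<rho> = {}"
    and z0: "(\<zeta>0, w0) \<in> Ye \<rho>" "Z (\<zeta>0, w0) = z0"
    and x1: "(\<xi>1, w1) \<in> Ye \<rho>" "Z' (\<xi>1, w1) = z1"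
    and Fp: "F (z0, w0) = (z1, w1)"
    and Dz: "(zeta Z has_derivative Dz) (at (\<zeta>0, w0))" "\<forall>c u. Dz (cmul c u) = cmul c (Dz u)"
       "fst (Dz (1,0)) \<noteq> 0" "snd (Dz (1,0)) = 0" "snd (Dz (0,1)) = 1"
    and Dz': "(zeta Z' has_derivative Dz') (at (\<xi>1, w1))" "\<forall>c u. Dz' (cmul c u) = cmul c (Dz' u)"
       "fst (Dz' (1,0)) \<noteq> 0" "snd (Dz' (1,0)) = 0" "snd (Dz' (0,1)) = 1" "cmod (fst (Dz' (0,1))) \<le> theta"
    and DF: "(F has_derivative DF) (at (z0, w0))" "\<forall>c u. DF (cmul c u) = cmul c (DF u)" "HC DF"
    and DF': "(F' has_derivative DF') (at (z1, w1))" "\<forall>c u. DF' (cmul c u) = cmul c (DF' u)" "HC DF'"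
  shows "deriv (\<lambda>z. Z0t (z, w0)) (fst (F' (z1, w1))) = 1 / fst (DF' (DF (1,0)))
    \<and> deriv (\<lambda>w. W2t (fst (F' (z1, w1)), w)) w0 =
       (fst (DF' (DF (1,0))) * snd (DF' (DF (0,1))) - fst (DF' (DF (0,1))) * snd (DF' (DF (1,0)))) / fst (DF' (DF (1,0)))"
proof -
  define P where "P = fst (DF (1,0))"
  define Q where "Q = fst (DF (0,1))"
  define R where "R = snd (DF (1,0))"
  define S where "S = snd (DF (0,1))"
  define P' where "P' = fst (DF' (1,0))"
  define Q' where "Q' = fst (DF' (0,1))"
  define R' where "R' = snd (DF' (1,0))"
  define S' where "S' = snd (DF' (0,1))"
  define Zz where "Zz = fst (Dz (1,0))"
  define Zw where "Zw = fst (Dz (0,1))"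
  define Zz' where "Zz' = fst (Dz' (1,0))"
  define Zw' where "Zw' = fst (Dz' (0,1))"
  have DFa: "DF (a, b) = (a * P + b * Q, a * R + b * S)" for a b
    using clin_repr2[OF has_derivative_linear[OF DF(1)] DF(2), of a b] by (simp add: cmul_def P_def Q_def R_def S_def)
  have DF'a: "DF' (a, b) = (a * P' + b * Q', a * R' + b * S')" for a b
    using clin_repr2[OF has_derivative_linear[OF DF'(1)] DF'(2), of a b] by (simp add: cmul_def P'_def Q'_def R'_def S'_def)
  have Dza: "Dz (a, b) = (a * Zz + b * Zw, b)" for a b
    using clin_repr2[OF has_derivative_linear[OF Dz(1)] Dz(2), of a b] Dz(4,5) by (simp add: cmul_def Zz_def Zw_def)
  have Dz'a: "Dz' (a, b) = (a * Zz' + b * Zw', b)" for a b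
    using clin_repr2[OF has_derivative_linear[OF Dz'(1)] Dz'(2), of a b] Dz'(4,5) by (simp add: cmul_def Zz'_def Zw'_def)
  have hP: "P \<noteq> 0" "cmod R \<le> theta * cmod P"
    using DF(3) unfolding HC_def P_def Q_def R_def S_def by auto
  have hP': "P' \<noteq> 0" "cmod Q' \<le> theta * cmod P'"
    using DF'(3) unfolding HC_def P'_def Q'_def R'_def S'_def by auto
  have Zz0: "Zz \<noteq> 0" and Zz'0: "Zz' \<noteq> 0" using Dz(3) Dz'(3) by (simp_all add: Zz_def Zz'_def)
  have hZw': "cmod Zw' \<le> theta" using Dz'(6) by (simp add: Zw'_def)
  have t4: "theta * theta = 1/4" by (simp add: theta_def)
  have zz0: "zeta Z (\<zeta>0, w0) = (z0, w0)" using z0 by (simp add: zeta_def)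
  have zx1: "zeta Z' (\<xi>1, w1) = (z1, w1)" using x1 by (simp add: zeta_def)
  have p0Y: "(z0, w0) \<in> Y" using Yeq z0(1) zz0 by force
  have q0Y: "(z1, w1) \<in> Y'" using Y'eq x1(1) zx1 by force
  have z1I: "z1 \<in> Itil \<rho>" using sub1 p0Y Fp by (force simp: Ye_def)
  have w1I: "w1 \<in> Itil \<rho>" and \<xi>1I: "\<xi>1 \<in> Itil \<rho>" using x1 by (auto simp: Ye_def)
  have w0I: "w0 \<in> Itil \<rho>" and \<zeta>0I: "\<zeta>0 \<in> Itil \<rho>" using z0 by (auto simp: Ye_def)
  have "\<zeta>0 \<notin> frontier (Itil \<rho>)"
  proof
    assume "\<zeta>0 \<in> frontier (Itil \<rho>)"
    then have "F (zeta Z (\<zeta>0, w0)) \<in> dsYe \<rho>" using fr1(1) w0I by blast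
    then have "(z1, w1) \<in> dsYe \<rho>" using zz0 Fp by simp
    then show False using fr2 q0Y by blast
  qed
  then obtain e1 where e1: "e1 > 0" "ball \<zeta>0 e1 \<subseteq> Itil \<rho>" using Itil_interior \<zeta>0I by blast
  have "w1 \<notin> frontier (Itil \<rho>)"
  proof
    assume "w1 \<in> frontier (Itil \<rho>)"
    then have "(z1, w1) \<in> duYe \<rho>" using z1I by (simp add: duYe_def)
    moreover have "(z1, w1) \<in> F ` Y" using p0Y Fp by force
    ultimately show False using fr1(2) by blast
  qed
  then obtain e2 where e2: "e2 > 0" "ball w1 e2 \<subseteq> Itil \<rho>" using Itil_interior w1I by blast
  define \<Phi> where "\<Phi> = (\<lambda>z (x::complex\<times>complex). fst (F (zeta Z (z, snd x))) - Z' (fst x, snd (F (zeta Z (z, snd x)))))"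
  define x0 where "x0 = (\<xi>1, w0)"
  define D\<Phi> where "D\<Phi> = (\<lambda>v::complex \<times> complex \<times> complex. fst (DF (Dz (fst v, snd (snd v))))
      - fst (Dz' (fst (snd v), snd (DF (Dz (fst v, snd (snd v)))))))"
  have dZ': "(Z' has_derivative (\<lambda>u. fst (Dz' u))) (at (\<xi>1, w1))"
    using has_derivative_fst[OF Dz'(1)] by (simp only: zeta_fst)
  have dZ: "(Z has_derivative (\<lambda>u. fst (Dz u))) (at (\<zeta>0, w0))"
    using has_derivative_fst[OF Dz(1)] by (simp only: zeta_fst)
  have dm: "((\<lambda>y::complex \<times> complex \<times> complex. (fst y, snd (snd y))) has_derivative (\<lambda>v. (fst v, snd (snd v)))) (at (\<zeta>0, x0))"
    by (rule has_derivative_Pair[OF has_derivative_fst[OF has_derivative_ident] has_derivative_snd[OF has_derivative_snd[OF has_derivative_ident]]])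
  have dzm: "((\<lambda>y::complex \<times> complex \<times> complex. zeta Z (fst y, snd (snd y))) has_derivative (\<lambda>v. Dz (fst v, snd (snd v)))) (at (\<zeta>0, x0))"
    using has_derivative_compose[OF dm] Dz(1) by (simp add: x0_def)
  have DF0: "(F has_derivative DF) (at (zeta Z (\<zeta>0, w0)))" using DF(1) zz0 by simp
  have dFzm: "((\<lambda>y::complex \<times> complex \<times> complex. F (zeta Z (fst y, snd (snd y)))) has_derivative (\<lambda>v. DF (Dz (fst v, snd (snd v))))) (at (\<zeta>0, x0))"
    using has_derivative_compose[OF dzm] DF0 by (simp add: x0_def)
  have db: "((\<lambda>y::complex \<times> complex \<times> complex. (fst (snd y), snd (F (zeta Z (fst y, snd (snd y)))))) has_derivative
       (\<lambda>v. (fst (snd v), snd (DF (Dz (fst v, snd (snd v))))))) (at (\<zeta>0, x0))"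
    by (rule has_derivative_Pair[OF has_derivative_fst[OF has_derivative_snd[OF has_derivative_ident]] has_derivative_snd[OF dFzm]])
  have b0: "(fst (snd (\<zeta>0, x0)), snd (F (zeta Z (fst (\<zeta>0, x0), snd (snd (\<zeta>0, x0)))))) = (\<xi>1, w1)"
    using zz0 Fp by (simp add: x0_def)
  have dZ'b: "((\<lambda>y::complex \<times> complex \<times> complex. Z' (fst (snd y), snd (F (zeta Z (fst y, snd (snd y)))))) has_derivative
       (\<lambda>v. fst (Dz' (fst (snd v), snd (DF (Dz (fst v, snd (snd v)))))))) (at (\<zeta>0, x0))"
    using has_derivative_compose[OF db, of Z' "\<lambda>u. fst (Dz' u)"] dZ' b0 by simp
  have der: "((\<lambda>y. \<Phi> (fst y) (snd y)) has_derivative D\<Phi>) (at (\<zeta>0, x0))"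
    unfolding \<Phi>_def D\<Phi>_def by (rule has_derivative_diff[OF has_derivative_fst[OF dFzm] dZ'b])
  have c_eq: "D\<Phi> (1,0) = Zz * (P - R * Zw')"
    by (simp add: D\<Phi>_def Dza DFa Dz'a algebra_simps)
  have "cmod (R * Zw') \<le> (theta * cmod P) * theta"
    unfolding norm_mult using hP(2) hZw' theta_pos by (intro mult_mono) auto
  also have "\<dots> = cmod P / 4" using t4 by (simp add: algebra_simps)
  finally have RZ: "cmod (R * Zw') \<le> cmod P / 4" .
  have "P - R * Zw' \<noteq> 0"
  proof
    assume "P - R * Zw' = 0"
    then have "cmod P = cmod (R * Zw')" by simp
    moreover have "cmod P > 0" using hP(1) by simp
    ultimately show False using RZ by linarith
  qed
  then have c0: "D\<Phi> (1,0) \<noteq> 0" using c_eq Zz0 by simp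
  have cl: "D\<Phi> (a,0) = a * D\<Phi> (1,0)" for a
    by (simp add: D\<Phi>_def Dza DFa Dz'a algebra_simps)
  have Dxi: "D\<Phi> (0, (1,0)) = - Zz'"
    by (simp add: D\<Phi>_def Dza DFa Dz'a)
  have zero: "\<Phi> \<zeta>0 x0 = 0" using zz0 Fp x1 by (simp add: \<Phi>_def x0_def)
  have hol: "\<exists>dh>0. \<forall>z x. cmod (z - \<zeta>0) < dh \<longrightarrow> norm (x - x0) < dh \<longrightarrow> (\<lambda>z. \<Phi> z x) field_differentiable at z"
  proof -
    have m0: "(fst (\<zeta>0, x0), snd (snd (\<zeta>0, x0))) \<in> UZ" using UZ(2) z0(1) by (auto simp: x0_def)
    obtain da where da: "da > 0" "\<And>y. norm (y - (\<zeta>0, x0)) < da \<Longrightarrow> (fst y, snd (snd y)) \<in> UZ"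
      using cont_nbhd[OF dm UZ(1) m0] by blast
    have m1: "zeta Z (fst (\<zeta>0, x0), snd (snd (\<zeta>0, x0))) \<in> UF" using UF(2) p0Y zz0 by (auto simp: x0_def)
    obtain db' where db': "db' > 0" "\<And>y. norm (y - (\<zeta>0, x0)) < db' \<Longrightarrow> zeta Z (fst y, snd (snd y)) \<in> UF"
      using cont_nbhd[OF dzm UF(1) m1] by blast
    have m2: "(fst (snd (\<zeta>0, x0)), snd (F (zeta Z (fst (\<zeta>0, x0), snd (snd (\<zeta>0, x0)))))) \<in> UZ'"
      using UZ'(2) x1(1) b0 by auto
    obtain dc where dc: "dc > 0" "\<And>y. norm (y - (\<zeta>0, x0)) < dc \<Longrightarrow> (fst (snd y), snd (F (zeta Z (fst y, snd (snd y))))) \<in> UZ'"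
      using cont_nbhd[OF db UZ'(1) m2] by blast
    define dh where "dh = min da (min db' dc) / 2"
    have dh: "dh > 0" using da db' dc by (simp add: dh_def)
    show ?thesis
    proof (intro exI[of _ dh] conjI allI impI)
      show "dh > 0" by (rule dh)
      fix z x assume z: "cmod (z - \<zeta>0) < dh" and x: "norm (x - x0) < dh"
      have "norm ((z, x) - (\<zeta>0, x0)) \<le> cmod (z - \<zeta>0) + norm (x - x0)"
        using norm_Pair_le[of "z - \<zeta>0" "x - x0"] by simp
      then have nz: "norm ((z, x) - (\<zeta>0, x0)) < min da (min db' dc)" using z x unfolding dh_def by linarith
      have i1: "(z, snd x) \<in> UZ" using da(2)[of "(z,x)"] nz by simp
      have i2: "zeta Z (z, snd x) \<in> UF" using db'(2)[of "(z,x)"] nz by simp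
      have i3: "(fst x, snd (F (zeta Z (z, snd x)))) \<in> UZ'" using dc(2)[of "(z,x)"] nz by simp
      obtain D1 where D1: "(zeta Z has_derivative D1) (at (z, snd x))" "\<forall>c u. D1 (cmul c u) = cmul c (D1 u)"
        using UZ(3) i1 by blast
      obtain D2 where D2: "(F has_derivative D2) (at (zeta Z (z, snd x)))" "\<forall>c u. D2 (cmul c u) = cmul c (D2 u)"
        using UF(3) i2 by blast
      obtain D3 where D3: "(zeta Z' has_derivative D3) (at (fst x, snd (F (zeta Z (z, snd x)))))" "\<forall>c u. D3 (cmul c u) = cmul c (D3 u)"
        using UZ'(3) i3 by blast
      obtain a1 b1 a2 b2 where r1: "\<And>a b. D1 (a,b) = (a*a1 + b*b1, a*a2 + b*b2)"
        using clin_coeffs[OF has_derivative_linear[OF D1(1)] D1(2)] by blast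
      obtain a3 b3 a4 b4 where r2: "\<And>a b. D2 (a,b) = (a*a3 + b*b3, a*a4 + b*b4)"
        using clin_coeffs[OF has_derivative_linear[OF D2(1)] D2(2)] by blast
      obtain a5 b5 a6 b6 where r3: "\<And>a b. D3 (a,b) = (a*a5 + b*b5, a*a6 + b*b6)"
        using clin_coeffs[OF has_derivative_linear[OF D3(1)] D3(2)] by blast
      have e1d: "((\<lambda>z. (z, snd x)) has_derivative (\<lambda>h. (h, 0))) (at z)"
        by (rule has_derivative_Pair[OF has_derivative_ident has_derivative_const])
      have e2d: "((\<lambda>z. zeta Z (z, snd x)) has_derivative (\<lambda>h. D1 (h, 0))) (at z)"
        using has_derivative_compose[OF e1d D1(1)] by simp
      have e3d: "((\<lambda>z. F (zeta Z (z, snd x))) has_derivative (\<lambda>h. D2 (D1 (h, 0)))) (at z)"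
        using has_derivative_compose[OF e2d D2(1)] by simp
      have e4d: "((\<lambda>z. (fst x, snd (F (zeta Z (z, snd x))))) has_derivative (\<lambda>h. (0, snd (D2 (D1 (h, 0)))))) (at z)"
        by (rule has_derivative_Pair[OF has_derivative_const has_derivative_snd[OF e3d]])
      have e5d: "((\<lambda>z. zeta Z' (fst x, snd (F (zeta Z (z, snd x))))) has_derivative (\<lambda>h. D3 (0, snd (D2 (D1 (h, 0)))))) (at z)"
        using has_derivative_compose[OF e4d D3(1)] by simp
      have e6d: "((\<lambda>z. \<Phi> z x) has_derivative (\<lambda>h. fst (D2 (D1 (h, 0))) - fst (D3 (0, snd (D2 (D1 (h, 0))))))) (at z)"
        unfolding \<Phi>_def using has_derivative_diff[OF has_derivative_fst[OF e3d] has_derivative_fst[OF e5d]]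
        by (simp add: zeta_def)
      show "(\<lambda>z. \<Phi> z x) field_differentiable at z"
        by (rule clin_field_diff[OF e6d]) (simp add: r1 r2 r3 algebra_simps)
    qed
  qed
  obtain \<delta>g g where g: "\<delta>g > 0" "g x0 = \<zeta>0" "\<And>x. norm (x - x0) < \<delta>g \<Longrightarrow> \<Phi> (g x) x = 0"
    "(g has_derivative (\<lambda>v. - D\<Phi> (0,v) / D\<Phi> (1,0))) (at x0)"
    using implicit_solve[OF der c0 cl zero hol] by blast
  define Dg where "Dg = (\<lambda>v. - D\<Phi> (0,v) / D\<Phi> (1,0))"
  have dg: "(g has_derivative Dg) (at x0)" using g(4) by (simp add: Dg_def)
  have Dg1: "Dg (1,0) \<noteq> 0" using Dxi c0 Zz'0 by (simp add: Dg_def)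
  have gx0: "g x0 \<in> ball \<zeta>0 e1" using g(2) e1 by simp
  obtain d4 where d4: "d4 > 0" "\<And>x. norm (x - x0) < d4 \<Longrightarrow> g x \<in> ball \<zeta>0 e1"
    using cont_nbhd[OF dg open_ball gx0] by blast
  have dgs: "((\<lambda>x. (g x, snd x)) has_derivative (\<lambda>v. (Dg v, snd v))) (at x0)"
    by (rule has_derivative_Pair[OF dg has_derivative_snd[OF has_derivative_ident]])
  have gs0: "(g x0, snd x0) = (\<zeta>0, w0)" using g(2) by (simp add: x0_def)
  have Dz0: "(zeta Z has_derivative Dz) (at (g x0, snd x0))" using Dz(1) gs0 by simp
  have dzg: "((\<lambda>x. zeta Z (g x, snd x)) has_derivative (\<lambda>v. Dz (Dg v, snd v))) (at x0)"
    using has_derivative_compose[OF dgs Dz0] by simp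
  have DF1: "(F has_derivative DF) (at (zeta Z (g x0, snd x0)))" using DF(1) gs0 zz0 by simp
  have dFg: "((\<lambda>x. F (zeta Z (g x, snd x))) has_derivative (\<lambda>v. DF (Dz (Dg v, snd v)))) (at x0)"
    using has_derivative_compose[OF dzg DF1] by simp
  have u0: "snd (F (zeta Z (g x0, snd x0))) \<in> ball w1 e2" using gs0 zz0 Fp e2 by simp
  obtain d5 where d5: "d5 > 0" "\<And>x. norm (x - x0) < d5 \<Longrightarrow> snd (F (zeta Z (g x, snd x))) \<in> ball w1 e2"
    using cont_nbhd[OF has_derivative_snd[OF dFg] open_ball u0] by blast
  define \<delta> where "\<delta> = min \<delta>g (min d4 d5)"
  have \<delta>: "\<delta> > 0" using g(1) d4 d5 by (simp add: \<delta>_def)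
  have x0Y: "x0 \<in> Ye \<rho>" using \<xi>1I w0I by (simp add: x0_def Ye_def)
  have inY: "(Z (g x, snd x), snd x) \<in> star_dom Y F Y'" if x: "x \<in> Ye \<rho> \<inter> ball x0 \<delta>" for x
  proof -
    have nx: "norm (x - x0) < \<delta>" using x by (simp add: dist_norm norm_minus_commute)
    have gI: "g x \<in> Itil \<rho>" using d4(2)[of x] nx e1(2) unfolding \<delta>_def by auto
    have uI: "snd (F (zeta Z (g x, snd x))) \<in> Itil \<rho>" using d5(2)[of x] nx e2(2) unfolding \<delta>_def by auto
    have ph: "\<Phi> (g x) x = 0" using g(3)[of x] nx unfolding \<delta>_def by auto
    have sxI: "snd x \<in> Itil \<rho>" and fxI: "fst x \<in> Itil \<rho>" using x by (auto simp: Ye_def)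
    have inYp: "zeta Z (g x, snd x) \<in> Y" using Yeq gI sxI by (auto simp: Ye_def)
    have "F (zeta Z (g x, snd x)) = zeta Z' (fst x, snd (F (zeta Z (g x, snd x))))"
      using ph by (simp add: \<Phi>_def zeta_def prod_eq_iff)
    moreover have "(fst x, snd (F (zeta Z (g x, snd x)))) \<in> Ye \<rho>" using fxI uI by (simp add: Ye_def)
    ultimately have "F (zeta Z (g x, snd x)) \<in> Y'" using Y'eq by simp
    then show ?thesis using inYp by (simp add: star_dom_def zeta_def)
  qed
  have dpf: "((\<lambda>x. Z (g x, snd x)) has_derivative (\<lambda>v. fst (Dz (Dg v, snd v)))) (at x0)"
    using has_derivative_fst[OF dzg] by (simp add: zeta_def)
  have pi1: "fst (Dz (Dg (1,0), snd (1::complex, 0::complex))) \<noteq> 0" using Dg1 Zz0 by (simp add: Dza)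
  have pf0: "(Z (g x0, snd x0), snd x0) = (z0, w0)" using gs0 z0 by simp
  have dH0: "((F' \<circ> F) has_derivative (\<lambda>v. DF' (DF v))) (at (z0, w0))"
    using has_derivative_compose[OF DF(1)] DF'(1) Fp by (simp add: o_def)
  have dH: "((F' \<circ> F) has_derivative (\<lambda>v. DF' (DF v))) (at (Z (g x0, snd x0), snd x0))"
    unfolding pf0 by (rule dH0)
  have DHcl: "\<And>c u. DF' (DF (cmul c u)) = cmul c (DF' (DF u))" using DF(2) DF'(2) by metis
  have DHfst: "fst (DF' (DF (1,0))) = P' * P + Q' * R" by (simp add: DFa DF'a)
  have N0: "fst (DF' (DF (1,0))) \<noteq> 0"
  proof
    assume "fst (DF' (DF (1,0))) = 0"
    then have "P' * P = - (Q' * R)" unfolding DHfst by (simp add: eq_neg_iff_add_eq_0)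
    then have "cmod P' * cmod P = cmod Q' * cmod R" by (metis norm_minus_cancel norm_mult)
    also have "\<dots> \<le> (theta * cmod P') * (theta * cmod P)" using hP hP' theta_pos by (intro mult_mono) auto
    finally show False using hP hP' by (simp add: theta_def field_simps)
  qed
  have inYe: "(fst ((F' \<circ> F) (Z (g x0, snd x0), snd x0)), snd x0) \<in> Ye \<rho>"
  proof -
    have e: "(F' \<circ> F) (Z (g x0, snd x0), snd x0) = F' (z1, w1)" unfolding pf0 using Fp by simp
    have "F' (z1, w1) \<in> Ye \<rho>" using sub2 q0Y by blast
    then have "fst (F' (z1, w1)) \<in> Itil \<rho>" by (auto simp: Ye_def mem_Times_iff)
    then show ?thesis unfolding e using w0I by (simp add: Ye_def x0_def)
  qed
  have G1: "deriv (\<lambda>z. Z0t (z, snd x0)) (fst ((F' \<circ> F) (Z (g x0, snd x0), snd x0))) = 1 / fst (DF' (DF (1,0)))"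
    by (rule GEN(1)[OF rho rep x0Y \<delta> inY dpf pi1 dH DHcl N0 inYe])
  have G2: "deriv (\<lambda>w. W2t (fst ((F' \<circ> F) (Z (g x0, snd x0), snd x0)), w)) (snd x0)
          = (fst (DF' (DF (1,0))) * snd (DF' (DF (0,1))) - fst (DF' (DF (0,1))) * snd (DF' (DF (1,0)))) / fst (DF' (DF (1,0)))"
    by (rule GEN(2)[OF rho rep x0Y \<delta> inY dpf pi1 dH DHcl N0 inYe])
  show ?thesis using G1 G2 pf0 Fp by (simp add: x0_def)
qed

theorem lemmaB2:
  fixes \<rho> :: real
    and Y Y' :: "(complex \<times> complex) set"
    and F F' :: "complex \<times> complex \<Rightarrow> complex \<times> complex"
    and Z0 W1 Z1 W2 Z0t W2t :: "complex \<times> complex \<Rightarrow> complex"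
    and z0 w0 z1 w1 z2 w2 :: complex
  assumes "\<rho> > 0"
    and "hyp_tr \<rho> Y F" and "hyp_tr \<rho> Y' F'"
    and "implicit_rep \<rho> Y F Z0 W1"
    and "implicit_rep \<rho> Y' F' Z1 W2"
    and "implicit_rep \<rho> (star_dom Y F Y') (F' \<circ> F) Z0t W2t"
    and "(z0, w0) \<in> Y" and "F (z0, w0) = (z1, w1)" and "(z1, w1) \<in> Y'"
    and "F' (z1, w1) = (z2, w2)"
  shows "1 / (1 + theta\<^sup>2) \<le> cmod (deriv (\<lambda>z. Z0t (z, w0)) z2)
            / (cmod (deriv (\<lambda>z. Z0 (z, w0)) z1) * cmod (deriv (\<lambda>z. Z1 (z, w1)) z2))
       \<and> cmod (deriv (\<lambda>z. Z0t (z, w0)) z2)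
            / (cmod (deriv (\<lambda>z. Z0 (z, w0)) z1) * cmod (deriv (\<lambda>z. Z1 (z, w1)) z2))
          \<le> 1 / (1 - theta\<^sup>2)
       \<and> 1 / (1 + theta\<^sup>2) \<le> cmod (deriv (\<lambda>w. W2t (z2, w)) w0)
            / (cmod (deriv (\<lambda>w. W1 (z1, w)) w0) * cmod (deriv (\<lambda>w. W2 (z2, w)) w1))
       \<and> cmod (deriv (\<lambda>w. W2t (z2, w)) w0)
            / (cmod (deriv (\<lambda>w. W1 (z1, w)) w0) * cmod (deriv (\<lambda>w. W2 (z2, w)) w1))
          \<le> 1 / (1 - theta\<^sup>2)"
proof -
  note rho = assms(1)
  obtain Z UZ UF where Yeq: "Y = zeta Z ` Ye \<rho>" and sub1: "F ` Y \<subseteq> Ye \<rho>" and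
     UZ: "open UZ" "Ye \<rho> \<subseteq> UZ" "\<forall>q\<in>UZ. \<exists>D. (zeta Z has_derivative D) (at q) \<and> (\<forall>c u. D (cmul c u) = cmul c (D u))" and
     zf1: "\<forall>q\<in>Ye \<rho>. \<forall>D. (zeta Z has_derivative D) (at q) \<longrightarrow>
         fst (D (1,0)) \<noteq> 0 \<and> snd (D (1,0)) = 0 \<and> snd (D (0,1)) = 1 \<and> cmod (fst (D (0,1))) \<le> theta" and
     UF: "open UF" "Y \<subseteq> UF" "\<forall>q\<in>UF. \<exists>D. (F has_derivative D) (at q) \<and> (\<forall>c u. D (cmul c u) = cmul c (D u))" and
     hc1: "\<forall>p\<in>Y. \<forall>D. (F has_derivative D) (at p) \<longrightarrow> HC D" and
     alt1: "(Y = Ye \<rho> \<and> F = id) \<or>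
      (F ` (zeta Z ` (frontier (Itil \<rho>) \<times> Itil \<rho>)) \<subseteq> dsYe \<rho> \<and> Y \<inter> dsYe \<rho> = {} \<and> F ` Y \<inter> duYe \<rho> = {})"
    using HD[OF rho assms(2)] by iprover
  obtain Z' UZ' UF' where Y'eq: "Y' = zeta Z' ` Ye \<rho>" and sub2: "F' ` Y' \<subseteq> Ye \<rho>" and
     UZ': "open UZ'" "Ye \<rho> \<subseteq> UZ'" "\<forall>q\<in>UZ'. \<exists>D. (zeta Z' has_derivative D) (at q) \<and> (\<forall>c u. D (cmul c u) = cmul c (D u))" and
     zf2: "\<forall>q\<in>Ye \<rho>. \<forall>D. (zeta Z' has_derivative D) (at q) \<longrightarrow>
         fst (D (1,0)) \<noteq> 0 \<and> snd (D (1,0)) = 0 \<and> snd (D (0,1)) = 1 \<and> cmod (fst (D (0,1))) \<le> theta" and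
     UF': "open UF'" "Y' \<subseteq> UF'" "\<forall>q\<in>UF'. \<exists>D. (F' has_derivative D) (at q) \<and> (\<forall>c u. D (cmul c u) = cmul c (D u))" and
     hc2: "\<forall>p\<in>Y'. \<forall>D. (F' has_derivative D) (at p) \<longrightarrow> HC D" and
     alt2: "(Y' = Ye \<rho> \<and> F' = id) \<or>
      (F' ` (zeta Z' ` (frontier (Itil \<rho>) \<times> Itil \<rho>)) \<subseteq> dsYe \<rho> \<and> Y' \<inter> dsYe \<rho> = {} \<and> F' ` Y' \<inter> duYe \<rho> = {})"
    using HD[OF rho assms(3)] by iprover
  have p0Y: "(z0, w0) \<in> Y" and Fp: "F (z0, w0) = (z1, w1)" and q0Y: "(z1, w1) \<in> Y'" and F'q: "F' (z1, w1) = (z2, w2)"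
    using assms(7-10) by auto
  obtain \<zeta>0 where z0: "(\<zeta>0, w0) \<in> Ye \<rho>" "Z (\<zeta>0, w0) = z0"
  proof -
    obtain x where x: "x \<in> Ye \<rho>" "(z0, w0) = zeta Z x" using p0Y Yeq by blast
    then have "snd x = w0" "Z x = z0" by (simp_all add: zeta_def)
    then show ?thesis using that[of "fst x"] x by (cases x) auto
  qed
  obtain \<xi>1 where x1: "(\<xi>1, w1) \<in> Ye \<rho>" "Z' (\<xi>1, w1) = z1"
  proof -
    obtain x where x: "x \<in> Ye \<rho>" "(z1, w1) = zeta Z' x" using q0Y Y'eq by blast
    then have "snd x = w1" "Z' x = z1" by (simp_all add: zeta_def)
    then show ?thesis using that[of "fst x"] x by (cases x) auto
  qed
  have zz0: "zeta Z (\<zeta>0, w0) = (z0, w0)" using z0 by (simp add: zeta_def)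
  have zx1: "zeta Z' (\<xi>1, w1) = (z1, w1)" using x1 by (simp add: zeta_def)
  obtain Dz where Dz: "(zeta Z has_derivative Dz) (at (\<zeta>0, w0))" "\<forall>c u. Dz (cmul c u) = cmul c (Dz u)"
    using UZ z0 by blast
  have Dzf: "fst (Dz (1,0)) \<noteq> 0" "snd (Dz (1,0)) = 0" "snd (Dz (0,1)) = 1" using zf1 z0 Dz by blast+
  obtain Dz' where Dz': "(zeta Z' has_derivative Dz') (at (\<xi>1, w1))" "\<forall>c u. Dz' (cmul c u) = cmul c (Dz' u)"
    using UZ' x1 by blast
  have Dz'f: "fst (Dz' (1,0)) \<noteq> 0" "snd (Dz' (1,0)) = 0" "snd (Dz' (0,1)) = 1" "cmod (fst (Dz' (0,1))) \<le> theta"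
    using zf2 x1 Dz' by blast+
  obtain DF where DF: "(F has_derivative DF) (at (z0, w0))" "\<forall>c u. DF (cmul c u) = cmul c (DF u)"
    using UF p0Y by blast
  have hcF: "HC DF" using hc1 p0Y DF by blast
  obtain DF' where DF': "(F' has_derivative DF') (at (z1, w1))" "\<forall>c u. DF' (cmul c u) = cmul c (DF' u)"
    using UF' q0Y by blast
  have hcF': "HC DF'" using hc2 q0Y DF' by blast
  define P where "P = fst (DF (1,0))"
  define Q where "Q = fst (DF (0,1))"
  define R where "R = snd (DF (1,0))"
  define S where "S = snd (DF (0,1))"
  define P' where "P' = fst (DF' (1,0))"
  define Q' where "Q' = fst (DF' (0,1))"
  define R' where "R' = snd (DF' (1,0))"
  define S' where "S' = snd (DF' (0,1))"
  have DFa: "DF (a, b) = (a * P + b * Q, a * R + b * S)" for a b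
    using clin_repr2[OF has_derivative_linear[OF DF(1)] DF(2), of a b] by (simp add: cmul_def P_def Q_def R_def S_def)
  have DF'a: "DF' (a, b) = (a * P' + b * Q', a * R' + b * S')" for a b
    using clin_repr2[OF has_derivative_linear[OF DF'(1)] DF'(2), of a b] by (simp add: cmul_def P'_def Q'_def R'_def S'_def)
  have hP: "P \<noteq> 0" "cmod R \<le> theta * cmod P" "P * S - Q * R \<noteq> 0"
    using hcF unfolding HC_def P_def Q_def R_def S_def by auto
  have hP': "P' \<noteq> 0" "cmod Q' \<le> theta * cmod P'" "P' * S' - Q' * R' \<noteq> 0"
    using hcF' unfolding HC_def P'_def Q'_def R'_def S'_def by auto
  have z1I: "z1 \<in> Itil \<rho>" and w1I: "w1 \<in> Itil \<rho>" using sub1 p0Y Fp by (force simp: Ye_def)+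
  have z2I: "z2 \<in> Itil \<rho>" using sub2 q0Y F'q by (force simp: Ye_def)
  have w0I: "w0 \<in> Itil \<rho>" using z0 by (simp add: Ye_def)
  have dZ: "(Z has_derivative (\<lambda>u. fst (Dz u))) (at (\<zeta>0, w0))"
    using has_derivative_fst[OF Dz(1)] by (simp only: zeta_fst)
  have dZ': "(Z' has_derivative (\<lambda>u. fst (Dz' u))) (at (\<xi>1, w1))"
    using has_derivative_fst[OF Dz'(1)] by (simp only: zeta_fst)
  have M1: "deriv (\<lambda>z. Z0 (z, w0)) z1 = 1 / P \<and> deriv (\<lambda>w. W1 (z1, w)) w0 = (P * S - Q * R) / P"
  proof -
    have g: "deriv (\<lambda>z. Z0 (z, snd (\<zeta>0, w0))) (fst (F (Z (\<zeta>0, w0), snd (\<zeta>0, w0)))) = 1 / fst (DF (1,0))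
      \<and> deriv (\<lambda>w. W1 (fst (F (Z (\<zeta>0, w0), snd (\<zeta>0, w0))), w)) (snd (\<zeta>0, w0))
          = (fst (DF (1,0)) * snd (DF (0,1)) - fst (DF (0,1)) * snd (DF (1,0))) / fst (DF (1,0))"
    proof -
      have inY: "\<And>x. x \<in> Ye \<rho> \<inter> ball (\<zeta>0, w0) 1 \<Longrightarrow> (Z x, snd x) \<in> Y"
        using Yeq by (auto simp: zeta_def)
      show ?thesis
        by (intro conjI GEN[OF rho assms(4) z0(1) zero_less_one, of Z "\<lambda>u. fst (Dz u)" DF])
           (use inY dZ Dzf DF hP z0 z1I w0I Fp in \<open>auto simp: P_def Ye_def\<close>)
    qed
    then show ?thesis using z0 Fp by (simp add: P_def Q_def R_def S_def)
  qed
  have M2: "deriv (\<lambda>z. Z1 (z, w1)) z2 = 1 / P' \<and> deriv (\<lambda>w. W2 (z2, w)) w1 = (P' * S' - Q' * R') / P'"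
  proof -
    have g: "deriv (\<lambda>z. Z1 (z, snd (\<xi>1, w1))) (fst (F' (Z' (\<xi>1, w1), snd (\<xi>1, w1)))) = 1 / fst (DF' (1,0))
      \<and> deriv (\<lambda>w. W2 (fst (F' (Z' (\<xi>1, w1), snd (\<xi>1, w1))), w)) (snd (\<xi>1, w1))
          = (fst (DF' (1,0)) * snd (DF' (0,1)) - fst (DF' (0,1)) * snd (DF' (1,0))) / fst (DF' (1,0))"
    proof -
      have inY: "\<And>x. x \<in> Ye \<rho> \<inter> ball (\<xi>1, w1) 1 \<Longrightarrow> (Z' x, snd x) \<in> Y'"
        using Y'eq by (auto simp: zeta_def)
      show ?thesis
        by (intro conjI GEN[OF rho assms(5) x1(1) zero_less_one, of Z' "\<lambda>u. fst (Dz' u)" DF'])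
           (use inY dZ' Dz'f DF' hP' x1 z2I w1I F'q in \<open>auto simp: P'_def Ye_def\<close>)
    qed
    then show ?thesis using x1 F'q by (simp add: P'_def Q'_def R'_def S'_def)
  qed
  define N where "N = P' * P + Q' * R"
  have DHfst: "fst (DF' (DF (1,0))) = N" and DHdet:
    "fst (DF' (DF (1,0))) * snd (DF' (DF (0,1))) - fst (DF' (DF (0,1))) * snd (DF' (DF (1,0)))
      = (P' * S' - Q' * R') * (P * S - Q * R)"
    by (simp_all add: DFa DF'a N_def algebra_simps)
  have dH: "((F' \<circ> F) has_derivative (\<lambda>v. DF' (DF v))) (at (z0, w0))"
    using has_derivative_compose[OF DF(1)] DF'(1) Fp by (simp add: o_def)
  have DHcl: "\<And>c u. DF' (DF (cmul c u)) = cmul c (DF' (DF u))" using DF(2) DF'(2) by metis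
  have N0: "N \<noteq> 0"
  proof
    assume "N = 0"
    then have "P' * P = - (Q' * R)" unfolding N_def by (simp add: eq_neg_iff_add_eq_0)
    then have "cmod P' * cmod P = cmod Q' * cmod R" by (metis norm_minus_cancel norm_mult)
    also have "\<dots> \<le> (theta * cmod P') * (theta * cmod P)" using hP hP' theta_pos by (intro mult_mono) auto
    finally show False using hP hP' by (simp add: theta_def field_simps)
  qed
  have C: "deriv (\<lambda>z. Z0t (z, w0)) z2 = 1 / N \<and> deriv (\<lambda>w. W2t (z2, w)) w0 = (P' * S' - Q' * R') * (P * S - Q * R) / N"
  proof (cases "Y' = Ye \<rho> \<and> F' = id")
    case True
    have g: "deriv (\<lambda>z. Z0t (z, snd (\<zeta>0, w0))) (fst ((F' \<circ> F) (Z (\<zeta>0, w0), snd (\<zeta>0, w0)))) = 1 / fst (DF' (DF (1,0)))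
      \<and> deriv (\<lambda>w. W2t (fst ((F' \<circ> F) (Z (\<zeta>0, w0), snd (\<zeta>0, w0))), w)) (snd (\<zeta>0, w0))
          = (fst (DF' (DF (1,0))) * snd (DF' (DF (0,1))) - fst (DF' (DF (0,1))) * snd (DF' (DF (1,0)))) / fst (DF' (DF (1,0)))"
    proof -
      have inY: "\<And>x. x \<in> Ye \<rho> \<inter> ball (\<zeta>0, w0) 1 \<Longrightarrow> (Z x, snd x) \<in> star_dom Y F Y'"
        using Yeq True sub1 by (auto simp: zeta_def star_dom_def)
      show ?thesis
        by (intro conjI GEN[OF rho assms(6) z0(1) zero_less_one, of Z "\<lambda>u. fst (Dz u)" "\<lambda>v. DF' (DF v)"])
           (use inY dZ Dzf dH DHcl DHfst N0 z0 z2I w0I Fp F'q in \<open>auto simp: Ye_def\<close>)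
    qed
    then show ?thesis using z0 Fp F'q DHfst DHdet by simp
  next
    case nF': False
    show ?thesis
    proof (cases "Y = Ye \<rho> \<and> F = id")
      case True
      have fr2: "Y' \<inter> dsYe \<rho> = {}" using alt2 nF' by blast
      have e01: "z0 = z1" "w0 = w1" using True Fp by auto
      have "z1 \<notin> frontier (Itil \<rho>)" using fr2 q0Y w1I by (auto simp: dsYe_def)
      moreover have "z1 \<in> Itil \<rho>" using True p0Y e01 by (simp add: Ye_def)
      ultimately obtain e where e: "e > 0" "ball z1 e \<subseteq> Itil \<rho>" using Itil_interior by blast
      have "Z' (\<xi>1, w1) \<in> ball z1 e" using x1 e by simp
      from cont_nbhd[OF dZ' open_ball this] obtain d where
        d: "d > 0" "\<And>x. norm (x - (\<xi>1, w1)) < d \<Longrightarrow> Z' x \<in> ball z1 e" by blast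
      have g: "deriv (\<lambda>z. Z0t (z, snd (\<xi>1, w1))) (fst ((F' \<circ> F) (Z' (\<xi>1, w1), snd (\<xi>1, w1)))) = 1 / fst (DF' (DF (1,0)))
        \<and> deriv (\<lambda>w. W2t (fst ((F' \<circ> F) (Z' (\<xi>1, w1), snd (\<xi>1, w1))), w)) (snd (\<xi>1, w1))
            = (fst (DF' (DF (1,0))) * snd (DF' (DF (0,1))) - fst (DF' (DF (0,1))) * snd (DF' (DF (1,0)))) / fst (DF' (DF (1,0)))"
      proof -
        have inY: "(Z' x, snd x) \<in> star_dom Y F Y'" if x: "x \<in> Ye \<rho> \<inter> ball (\<xi>1, w1) d" for x
        proof -
          from x have "norm (x - (\<xi>1, w1)) < d" by (simp add: dist_norm norm_minus_commute)
        then have "Z' x \<in> Itil \<rho>" using d(2) e(2) by blast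
        moreover have "snd x \<in> Itil \<rho>" using x by (auto simp: Ye_def)
        moreover have "zeta Z' x \<in> Y'" using x Y'eq by blast
        ultimately show "(Z' x, snd x) \<in> star_dom Y F Y'"
          using True by (simp add: star_dom_def zeta_def Ye_def)
        qed
        show ?thesis
          by (intro conjI GEN[OF rho assms(6) x1(1) d(1), of Z' "\<lambda>u. fst (Dz' u)" "\<lambda>v. DF' (DF v)"])
             (use inY dZ' Dz'f dH DHcl DHfst N0 x1 e01 z2I w1I F'q True in \<open>auto simp: Ye_def\<close>)
      qed
      then show ?thesis using x1 e01 Fp F'q DHfst DHdet True by simp
    next
      case nF: False
      have fr1: "F ` (zeta Z ` (frontier (Itil \<rho>) \<times> Itil \<rho>)) \<subseteq> dsYe \<rho>" "F ` Y \<inter> duYe \<rho> = {}"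
        using alt1 nF by blast+
      have fr2: "Y' \<inter> dsYe \<rho> = {}" using alt2 nF' by blast
      have "deriv (\<lambda>z. Z0t (z, w0)) (fst (F' (z1, w1))) = 1 / fst (DF' (DF (1,0)))
        \<and> deriv (\<lambda>w. W2t (fst (F' (z1, w1)), w)) w0 =
         (fst (DF' (DF (1,0))) * snd (DF' (DF (0,1))) - fst (DF' (DF (0,1))) * snd (DF' (DF (1,0)))) / fst (DF' (DF (1,0)))"
        by (rule COMPc[OF rho assms(6) Yeq Y'eq sub1 sub2 UZ UZ' UF fr1 fr2 z0 x1 Fp Dz Dzf Dz' Dz'f DF hcF DF' hcF'])
      then show ?thesis using F'q DHfst DHdet by simp
    qed
  qed
  show ?thesis
    using ALG[OF hP(1) hP'(1) hP(2) hP'(2) hP(3) hP'(3)] M1 M2 C unfolding N_def by simp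
qed

end
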